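(* (i) For every Brjuno number $x\in(0,\tfrac12)$, $$\Delta^-(x)=\sum_{i=0}^{\infty}(-1)^i\,\beta_{i-1}(x)\,\tilde f(\varepsilon_i x_i).$$ (ii) The series $\sum_{i\ge0}(-1)^i\beta_{i-1}(x)\tilde f(\varepsilon_ix_i)$ converges uniformly on $(0,\tfrac12)\setminus\mathbf{Q}$. (iii) For each integer $M\ge1$, let $\Delta^-_M(x)=\sum_{i=0}^{M}(-1)^i\beta_{i-1}(x)\tilde f(\varepsilon_ix_i)$ for irrational $x\in(0,\tfrac12)$. Then $\Delta^-_M$ is continuous on $(0,\tfrac12)\setminus\mathbf{Q}$ and has a limit (taken through irrationals) at every rational point of $(0,\tfrac12)$ of depth greater than $M$; at every rational $p/q\in(0,\tfrac12)$ in lowest terms of depth at most $M$, the one-sided limits of $\Delta^-_M$ through irrationals exist and satisfy $$\lim_{x\to(p/q)^+}\Delta^-_M(x)-\lim_{x\to(p/q)^-}\Delta^-_M(x)=\frac{2}{q}.$$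
   Context: Nearest-integer continued fraction: $A_{1/2}(y)=\bigl|\tfrac1y-\lfloor\tfrac1y+\tfrac12\rfloor\bigr|$ for $y\in(0,\tfrac12]$, mapping into $[0,\tfrac12]$. For irrational $x\in(0,\tfrac12)$ set $x_0=x$, $\varepsilon_0=1$, and for $i\ge1$: $a_i=\lfloor 1/x_{i-1}+\tfrac12\rfloor$, $\varepsilon_i=\operatorname{sgn}(1/x_{i-1}-a_i)\in\{\pm1\}$, $x_i=\varepsilon_i(1/x_{i-1}-a_i)=A_{1/2}(x_{i-1})\in(0,\tfrac12)$. Put $\beta_{-1}(x)=1$ and $\beta_i(x)=\prod_{k=0}^{i}\varepsilon_kx_k$. The depth of a rational $r\in(0,\tfrac12)$ is the least $i\ge1$ with $A_{1/2}^i(r)=0$. Let $A(y)=1/y-\lfloor1/y\rfloor$ (Gauss map). Define $w$ on irrationals $y\in(0,\tfrac12)$ by $w(y)=\frac y2\log\frac{1-y}{y}-\log(1-y)$, extended to all irrationals as an even $1$-periodic function. For irrational $x\in(0,\tfrac12)$ with $n=\lfloor1/x\rfloor$ let $\Phi(x)=x\log x+xA(x)\log(xA(x))+x\sum_{j=1}^{n-1}\log(1-jx)$ and $f(x)=-w(x)-xw(A(x))-\Phi(x)$; $\tilde f$ is the odd $1$-periodic extension of $f$ to $\mathbf{R}\setminus\mathbf{Q}$ ($\tilde f(x)=f(\{x\})$ if $\{x\}\in(0,\tfrac12)$, $\tilde f(x)=-f(1-\{x\})$ if $\{x\}\in(\tfrac12,1)$). Brjuno/Wilton/semi-Brjuno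 functions: for irrational $x$ with $y=\{x\}$, $A_0(y)=\lfloor1/y+1\rfloor-1/y$, $B(x)=\sum_{j\ge0}(\prod_{k<j}A^k(y))\log\frac1{A^j(y)}$, $B_0(x)=\sum_{j\ge0}(\prod_{k<j}A_0^k(y))\log\frac1{A_0^j(y)}$, $W(x)=\sum_{j\ge0}(-1)^j(\prod_{k<j}A^k(y))\log\frac1{A^j(y)}$. $x$ is Brjuno if $B(x)<\infty$ (then $B_0(\pm x)<\infty$ and $W(\pm x)$ converge). For Brjuno $x$: $\Delta^-(x)=\tfrac12(W(x)-W(-x))-(B_0(x)-B_0(-x))$. Known facts usable here: $w=W^+$ (even part of $W$), and for Brjuno $x\in(0,\tfrac12)$ one has $\Phi(x)=xB_0(A(x))-B_0(1-x)$; $\Delta^-$ is odd and $1$-periodic and satisfies $\Delta^-(x)=f(x)-x\Delta^-(A(x))$ for Brjuno $x\in(0,\tfrac12)$. *)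

theory Defs
  imports "HOL-Analysis.Analysis"
begin

definition A_half :: "real \<Rightarrow> real" where
  "A_half y = \<bar>1 / y - of_int \<lfloor>1 / y + 1/2\<rfloor>\<bar>"

definition nicf_x :: "real \<Rightarrow> nat \<Rightarrow> real" where
  "nicf_x x i = (A_half ^^ i) x"

definition nicf_a :: "real \<Rightarrow> nat \<Rightarrow> int" where
  "nicf_a x i = \<lfloor>1 / nicf_x x (i - 1) + 1/2\<rfloor>"

definition nicf_eps :: "real \<Rightarrow> nat \<Rightarrow> real" where
  "nicf_eps x i = (if i = 0 then 1
                   else sgn (1 / nicf_x x (i - 1) - of_int (nicf_a x i)))"

text \<open>beta_shift x i = beta_{i-1}(x) = prod_{k=0}^{i-1} eps_k x_k (so beta_shift x 0 = beta_{-1} = 1).\<close>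
definition beta_shift :: "real \<Rightarrow> nat \<Rightarrow> real" where
  "beta_shift x i = (\<Prod>k<i. nicf_eps x k * nicf_x x k)"

definition nicf_depth :: "real \<Rightarrow> nat" where
  "nicf_depth r = (LEAST i. i \<ge> 1 \<and> (A_half ^^ i) r = 0)"

definition gaussA :: "real \<Rightarrow> real" where
  "gaussA y = 1 / y - of_int \<lfloor>1 / y\<rfloor>"

definition gaussA0 :: "real \<Rightarrow> real" where
  "gaussA0 y = of_int \<lfloor>1 / y + 1\<rfloor> - 1 / y"

definition B_term :: "real \<Rightarrow> nat \<Rightarrow> real" where
  "B_term x j = (\<Prod>k<j. (gaussA ^^ k) (frac x)) * ln (1 / (gaussA ^^ j) (frac x))"

definition B0_term :: "real \<Rightarrow> nat \<Rightarrow> real" where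
  "B0_term x j = (\<Prod>k<j. (gaussA0 ^^ k) (frac x)) * ln (1 / (gaussA0 ^^ j) (frac x))"

definition W_term :: "real \<Rightarrow> nat \<Rightarrow> real" where
  "W_term x j = (-1) ^ j * (\<Prod>k<j. (gaussA ^^ k) (frac x)) * ln (1 / (gaussA ^^ j) (frac x))"

definition brjunoB :: "real \<Rightarrow> real" where "brjunoB x = (\<Sum>j. B_term x j)"
definition brjunoB0 :: "real \<Rightarrow> real" where "brjunoB0 x = (\<Sum>j. B0_term x j)"
definition wiltonW :: "real \<Rightarrow> real" where "wiltonW x = (\<Sum>j. W_term x j)"

text \<open>x is a Brjuno number: irrational with B(x) < \<infinity> (the terms are nonnegative).\<close>
definition brjuno :: "real \<Rightarrow> bool" where
  "brjuno x \<longleftrightarrow> x \<notin> \<rat> \<and> summable (B_term x)"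

definition Delta_minus :: "real \<Rightarrow> real" where
  "Delta_minus x = (wiltonW x - wiltonW (- x)) / 2 - (brjunoB0 x - brjunoB0 (- x))"

text \<open>w: on (0,1/2) given by the formula, extended evenly and 1-periodically.\<close>
definition w0 :: "real \<Rightarrow> real" where
  "w0 y = y / 2 * ln ((1 - y) / y) - ln (1 - y)"

definition w_fun :: "real \<Rightarrow> real" where
  "w_fun y = (if frac y < 1/2 then w0 (frac y) else w0 (1 - frac y))"

definition Phi :: "real \<Rightarrow> real" where
  "Phi x = x * ln x + x * gaussA x * ln (x * gaussA x)
           + x * (\<Sum>j=1..nat \<lfloor>1 / x\<rfloor> - 1. ln (1 - real j * x))"

definition f_fun :: "real \<Rightarrow> real" where
  "f_fun x = - w_fun x - x * w_fun (gaussA x) - Phi x"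

text \<open>Odd 1-periodic extension of f.\<close>
definition f_tilde :: "real \<Rightarrow> real" where
  "f_tilde x = (if frac x < 1/2 then f_fun (frac x) else - f_fun (1 - frac x))"

definition dterm :: "real \<Rightarrow> nat \<Rightarrow> real" where
  "dterm x i = (-1) ^ i * beta_shift x i * f_tilde (nicf_eps x i * nicf_x x i)"

definition DeltaM :: "nat \<Rightarrow> real \<Rightarrow> real" where
  "DeltaM M x = (\<Sum>i\<le>M. dterm x i)"

end

theory Submission
  imports Defs "HOL-Analysis.Analysis"
begin


lemma xlnx_sqrt: fixes t :: real assumes "0 \<le> t" "t \<le> 1" shows "\<bar>t * ln t\<bar> \<le> 2 * sqrt t"
proof (cases "t = 0")
  case True thus ?thesis by simp
next
  case False
  hence tp: "t > 0" using assms by simp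
  have s: "sqrt t > 0" using tp by simp
  have "ln (1 / sqrt t) \<le> 1 / sqrt t - 1" using s by (intro ln_le_minus_one) simp
  moreover have "ln (1 / sqrt t) = - ln t / 2" using tp by (simp add: ln_div ln_sqrt)
  ultimately have "- ln t \<le> 2 / sqrt t" by (simp add: field_simps)
  hence "t * (- ln t) \<le> t * (2 / sqrt t)" using tp by (intro mult_left_mono) auto
  also have "t * (2 / sqrt t) = 2 * sqrt t" using tp
    by (metis real_div_sqrt times_divide_eq_right mult.commute less_imp_le)
  finally have a: "- (t * ln t) \<le> 2 * sqrt t" by simp
  have "ln t \<le> 0" using assms tp by simp
  hence "t * ln t \<le> 0" using tp by (simp add: mult_nonneg_nonpos)
  thus ?thesis using a by simp
qed

lemma xlnx_half: fixes t :: real assumes "0 \<le> t" "t \<le> 1" shows "\<bar>t * ln t\<bar> \<le> 1/2"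
proof (cases "t = 0")
  case True thus ?thesis by simp
next
  case False
  hence tp: "t > 0" using assms by simp
  have "ln (1 / (2*t)) \<le> 1 / (2*t) - 1" using tp by (intro ln_le_minus_one) simp
  moreover have "ln (1 / (2*t)) = - ln 2 - ln t" using tp by (simp add: ln_div ln_mult)
  ultimately have "- ln t \<le> 1/(2*t) - 1 + ln 2" by simp
  moreover have "ln (2::real) < 1" by (rule ln_2_less_1)
  ultimately have "- ln t \<le> 1/(2*t)" by simp
  hence "t * (- ln t) \<le> t * (1/(2*t))" using tp by (intro mult_left_mono) auto
  hence a: "- (t * ln t) \<le> 1/2" using tp by simp
  have "ln t \<le> 0" using assms tp by simp
  hence "t * ln t \<le> 0" using tp by (simp add: mult_nonneg_nonpos)
  thus ?thesis using a by simp
qed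

lemma ln1m_bound: fixes t :: real assumes "0 \<le> t" "t \<le> 1/2" shows "\<bar>ln (1 - t)\<bar> \<le> 2 * t" "ln (1 - t) \<le> 0"
proof -
  have p: "1 - t > 0" using assms by simp
  have u: "ln (1 - t) \<le> 0" using assms by simp
  have "ln (1 / (1 - t)) \<le> 1 / (1 - t) - 1" using p by (intro ln_le_minus_one) simp
  moreover have "ln (1 / (1 - t)) = - ln (1 - t)" using p by (simp add: ln_div)
  moreover have "1 / (1 - t) - 1 = t / (1 - t)" using p by (simp add: field_simps)
  moreover have "t / (1 - t) \<le> 2 * t"
  proof -
    have "0 \<le> t * (1 - 2*t)" using assms by (intro mult_nonneg_nonneg) auto
    hence "t \<le> 2 * t * (1 - t)" by (simp add: algebra_simps)
    thus ?thesis using p by (simp add: divide_le_eq)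
  qed
  ultimately have "- ln (1 - t) \<le> 2 * t" by linarith
  thus "\<bar>ln (1 - t)\<bar> \<le> 2 * t" using u by simp
  show "ln (1 - t) \<le> 0" by (rule u)
qed


definition sr :: "real \<Rightarrow> real" where "sr t = t - of_int \<lfloor>t + 1/2\<rfloor>"

lemma sr_bounds: "- 1/2 \<le> sr t" "sr t < 1/2"
  unfolding sr_def using floor_correct[of "t + 1/2"] by linarith+

lemma sr_shift: "sr (t + of_int k) = sr t"
proof -
  have "t + of_int k + 1/2 = (t + 1/2) + of_int k" by simp
  hence "\<lfloor>t + of_int k + 1/2\<rfloor> = \<lfloor>t + 1/2\<rfloor> + k" by (simp only: floor_add_int)
  thus ?thesis unfolding sr_def by simp
qed

lemma sr_shift': "sr (t - of_int k) = sr t"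
  using sr_shift[of t "-k"] by simp

lemma A_half_sr: "A_half z = \<bar>sr (1 / z)\<bar>"
  unfolding A_half_def sr_def by simp

lemma abs_sr_le: "\<bar>sr t\<bar> \<le> 1/2"
  using sr_bounds[of t] by linarith

lemma floor_half_lt: "frac y < 1/2 \<Longrightarrow> \<lfloor>y + 1/2\<rfloor> = \<lfloor>y\<rfloor>"
  unfolding frac_def by (intro floor_unique) (use floor_correct[of y] in linarith)+

lemma floor_half_ge: "frac y \<ge> 1/2 \<Longrightarrow> \<lfloor>y + 1/2\<rfloor> = \<lfloor>y\<rfloor> + 1"
  unfolding frac_def by (intro floor_unique) (use floor_correct[of y] in \<open>simp; linarith\<close>)+

lemma abs_sr_frac: "\<bar>sr y\<bar> = (if frac y < 1/2 then frac y else 1 - frac y)"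
proof (cases "frac y < 1/2")
  case True
  thus ?thesis using floor_half_lt[OF True] frac_ge_0[of y] unfolding sr_def frac_def by simp
next
  case False
  thus ?thesis using floor_half_ge[of y] frac_lt_1[of y] unfolding sr_def frac_def by simp
qed

lemma abs_sr_cont: "isCont (\<lambda>t. \<bar>sr t\<bar>) t0"
proof (cases "t0 + 1/2 \<in> \<int>")
  case False
  have "((\<lambda>t. of_int \<lfloor>t + 1/2\<rfloor> :: real) \<longlongrightarrow> of_int \<lfloor>t0 + 1/2\<rfloor>) (at t0)"
    by (rule tendsto_of_int_floor) (auto intro!: tendsto_eq_intros False)
  hence "((\<lambda>t. \<bar>t - of_int \<lfloor>t + 1/2\<rfloor>\<bar>) \<longlongrightarrow> \<bar>t0 - of_int \<lfloor>t0 + 1/2\<rfloor>\<bar>) (at t0)"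
    by (intro tendsto_intros) auto
  thus ?thesis unfolding isCont_def sr_def .
next
  case True
  then obtain k where k: "t0 + 1/2 = of_int k" by (metis Ints_cases)
  have v: "\<bar>sr t0\<bar> = 1/2" unfolding sr_def using k by simp
  have L: "((\<lambda>t. \<bar>sr t\<bar>) \<longlongrightarrow> 1/2) (at_left t0)"
  proof -
    have ev: "\<forall>\<^sub>F t in at_left t0. \<bar>t - of_int (k - 1)\<bar> = \<bar>sr t\<bar>"
    proof -
      have ev0: "\<forall>\<^sub>F t in at_left t0. t \<in> {t0 - 1<..<t0}" by (rule eventually_at_left_real) simp
      show ?thesis using ev0
    proof (rule eventually_mono)
      fix t assume "t \<in> {t0 - 1<..<t0}"
      hence "\<lfloor>t + 1/2\<rfloor> = k - 1" using k by (intro floor_unique) auto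
      thus "\<bar>t - of_int (k - 1)\<bar> = \<bar>sr t\<bar>" unfolding sr_def by simp
    qed
    qed
    have v2: "\<bar>t0 - of_int (k - 1)\<bar> = (1/2::real)" using k by simp
    have "((\<lambda>t. \<bar>t - of_int (k - 1)\<bar>) \<longlongrightarrow> \<bar>t0 - of_int (k - 1)\<bar>) (at_left t0)"
      by (intro tendsto_intros)
    hence "((\<lambda>t. \<bar>t - of_int (k - 1)\<bar>) \<longlongrightarrow> 1/2) (at_left t0)" unfolding v2 .
    thus ?thesis using tendsto_cong[OF ev] by simp
  qed
  have R: "((\<lambda>t. \<bar>sr t\<bar>) \<longlongrightarrow> 1/2) (at_right t0)"
  proof -
    have ev: "\<forall>\<^sub>F t in at_right t0. \<bar>t - of_int k\<bar> = \<bar>sr t\<bar>"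
    proof -
      have ev0: "\<forall>\<^sub>F t in at_right t0. t \<in> {t0<..<t0 + 1}" by (rule eventually_at_right_real) simp
      show ?thesis using ev0
    proof (rule eventually_mono)
      fix t assume "t \<in> {t0<..<t0 + 1}"
      hence "\<lfloor>t + 1/2\<rfloor> = k" using k by (intro floor_unique) auto
      thus "\<bar>t - of_int k\<bar> = \<bar>sr t\<bar>" unfolding sr_def by simp
    qed
    qed
    have v2: "\<bar>t0 - of_int k\<bar> = (1/2::real)" using k by simp
    have "((\<lambda>t. \<bar>t - of_int k\<bar>) \<longlongrightarrow> \<bar>t0 - of_int k\<bar>) (at_right t0)"
      by (intro tendsto_intros)
    hence "((\<lambda>t. \<bar>t - of_int k\<bar>) \<longlongrightarrow> 1/2) (at_right t0)" unfolding v2 .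
    thus ?thesis using tendsto_cong[OF ev] by simp
  qed
  have "continuous (at_left t0) (\<lambda>t. \<bar>sr t\<bar>)" unfolding continuous_within v using L .
  moreover have "continuous (at_right t0) (\<lambda>t. \<bar>sr t\<bar>)" unfolding continuous_within v using R .
  ultimately show ?thesis using continuous_at_split by blast
qed

definition xl :: "real \<Rightarrow> real" where "xl t = t * ln t"

lemma xl_cont: "isCont xl t"
proof (cases "t = 0")
  case False thus ?thesis unfolding xl_def by (intro continuous_intros) auto
next
  case True
  have ev: "\<forall>\<^sub>F y in at (0::real). norm (y * ln y) \<le> 2 * sqrt \<bar>y\<bar>"
  proof -
    have "\<forall>\<^sub>F y in at (0::real). y \<in> ball 0 1 \<and> y \<in> UNIV" by (rule eventually_at_ball) simp
    then show ?thesis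
    proof (rule eventually_mono)
      fix y :: real assume "y \<in> ball 0 1 \<and> y \<in> UNIV"
      hence "\<bar>y\<bar> \<le> 1" by (simp add: dist_norm)
      hence "\<bar>\<bar>y\<bar> * ln \<bar>y\<bar>\<bar> \<le> 2 * sqrt \<bar>y\<bar>" by (intro xlnx_sqrt) auto
      moreover have "ln y = ln \<bar>y\<bar>"
      proof (cases "y \<ge> 0")
        case False thus ?thesis using ln_minus[of y] by simp
      qed simp
      ultimately show "norm (y * ln y) \<le> 2 * sqrt \<bar>y\<bar>" by (simp add: abs_mult)
    qed
  qed
  have lim: "((\<lambda>y. 2 * sqrt \<bar>y\<bar>) \<longlongrightarrow> 0) (at (0::real))"
  proof -
    have "((\<lambda>y. 2 * sqrt \<bar>y\<bar>) \<longlongrightarrow> 2 * sqrt \<bar>0\<bar>) (at (0::real))"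
      by (intro tendsto_intros)
    thus ?thesis by simp
  qed
  have "((\<lambda>y::real. y * ln y) \<longlongrightarrow> 0) (at 0)" using Lim_null_comparison[OF ev lim] by simp
  thus ?thesis using True unfolding isCont_def xl_def by simp
qed

definition w1 :: "real \<Rightarrow> real" where "w1 y = (y * ln (1 - y) - xl y) / 2 - ln (1 - y)"

lemma w0_w1: assumes "0 \<le> y" "y \<le> 1/2" shows "w0 y = w1 y"
proof (cases "y = 0")
  case True thus ?thesis unfolding w0_def w1_def xl_def by simp
next
  case False
  hence e: "ln ((1 - y) / y) = ln (1 - y) - ln y" using assms by (simp add: ln_div)
  have "w0 y = y / 2 * (ln (1 - y) - ln y) - ln (1 - y)" unfolding w0_def e ..
  also have "\<dots> = w1 y" unfolding w1_def xl_def by (simp add: field_simps)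
  finally show ?thesis .
qed

lemma w_fun_sr: "w_fun y = w1 \<bar>sr y\<bar>"
proof -
  have "w_fun y = w0 \<bar>sr y\<bar>" unfolding w_fun_def abs_sr_frac by simp
  also have "\<dots> = w1 \<bar>sr y\<bar>" using abs_sr_le[of y] by (intro w0_w1) auto
  finally show ?thesis .
qed

lemma w1_cont: "y < 1 \<Longrightarrow> isCont w1 y"
  unfolding w1_def by (intro continuous_intros xl_cont) auto

lemma w_fun_cont: "isCont w_fun y"
proof -
  have "isCont (\<lambda>t. w1 \<bar>sr t\<bar>) y"
    using abs_sr_le[of y] by (intro continuous_at_compose[OF abs_sr_cont, unfolded o_def] w1_cont) auto
  thus ?thesis unfolding w_fun_sr[abs_def] .
qed

lemma w_fun_shift: "w_fun (y + of_int k) = w_fun y"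
  unfolding w_fun_sr sr_shift ..

lemma w0_bounds: assumes "0 \<le> y" "y \<le> 1/2" shows "0 \<le> w0 y" "w0 y \<le> 2" "\<bar>w0 y\<bar> \<le> 4 * sqrt y"
proof -
  have a: "\<bar>ln (1 - y)\<bar> \<le> 2 * y" "ln (1 - y) \<le> 0" using ln1m_bound assms by auto
  have b: "\<bar>y * ln y\<bar> \<le> 2 * sqrt y" "\<bar>y * ln y\<bar> \<le> 1/2" using xlnx_sqrt xlnx_half assms by auto
  have c0: "\<bar>y * ln (1 - y)\<bar> = y * \<bar>ln (1 - y)\<bar>" using assms by (simp add: abs_mult)
  have c: "\<bar>y * ln (1 - y)\<bar> \<le> y * (2 * y)" unfolding c0 using a assms by (intro mult_left_mono) auto
  have yy: "y * (2 * y) \<le> y" using mult_left_mono[of "2*y" 1 y] assms by simp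
  have ys: "y \<le> sqrt y" using assms by (simp add: real_le_rsqrt power2_eq_square mult_left_le_one_le)
  have d: "y * ln (1 - y) - y * ln y \<ge> 0"
  proof (cases "y = 0")
    case False
    hence "ln y \<le> ln (1 - y)" using assms by (subst ln_le_cancel_iff) auto
    hence "y * ln y \<le> y * ln (1 - y)" using assms by (intro mult_left_mono) auto
    thus ?thesis by simp
  qed simp
  have e: "w0 y = y * ln (1 - y) / 2 - y * ln y / 2 - ln (1 - y)"
    using w0_w1[OF assms] unfolding w1_def xl_def by (simp add: diff_divide_distrib)
  have d2: "0 \<le> y * ln (1 - y) / 2 - y * ln y / 2" using d by simp
  show "0 \<le> w0 y" unfolding e using d2 a(2) by linarith
  have c2: "y * ln (1 - y) \<le> y" using c yy by linarith
  have b2: "- (y * ln y) \<le> 1/2" using b by linarith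
  have a2: "- ln (1 - y) \<le> 1" using a assms by linarith
  show "w0 y \<le> 2" unfolding e using c2 b2 a2 assms by linarith
  have b3: "- (y * ln y) \<le> 2 * sqrt y" using b by linarith
  have a3: "- ln (1 - y) \<le> 2 * y" using a by linarith
  have "w0 y \<le> 4 * sqrt y" unfolding e using c2 b3 a3 ys assms by linarith
  thus "\<bar>w0 y\<bar> \<le> 4 * sqrt y" using e a(2) d2 by linarith
qed

lemma w_fun_bound: "\<bar>w_fun y\<bar> \<le> 2"
proof -
  have "w_fun y = w0 \<bar>sr y\<bar>" unfolding w_fun_def abs_sr_frac by simp
  thus ?thesis using w0_bounds[of "\<bar>sr y\<bar>"] abs_sr_le[of y] by simp
qed


definition Gf :: "real \<Rightarrow> real" where "Gf t = - (1 - t) * ln (1 - t) - t"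

lemma G_inc_le: assumes "0 \<le> a" "a \<le> b" "b \<le> 1" "a < 1"
  shows "Gf b - Gf a \<le> (b - a) * ln (1 - a)"
proof -
  define P where "P = 1 - a"
  define Q where "Q = 1 - b"
  have P: "P > 0" and Q: "Q \<ge> 0" and PQ: "Q \<le> P" using assms unfolding P_def Q_def by auto
  have key: "Q * ln P - Q * ln Q \<le> P - Q"
  proof (cases "Q = 0")
    case True thus ?thesis using P by simp
  next
    case False
    hence Qp: "Q > 0" using Q by simp
    have "ln (P / Q) \<le> P / Q - 1" using P Qp by (intro ln_le_minus_one) simp
    hence "Q * ln (P / Q) \<le> Q * (P / Q - 1)" using Qp by (intro mult_left_mono) auto
    moreover have "ln (P / Q) = ln P - ln Q" using P Qp by (simp add: ln_div)
    ultimately show ?thesis using Qp by (simp add: algebra_simps)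
  qed
  have e: "Gf b - Gf a = - Q * ln Q + P * ln P - (P - Q)" unfolding Gf_def P_def Q_def by (simp add: algebra_simps)
  have "(b - a) * ln (1 - a) = (P - Q) * ln P" unfolding P_def Q_def by simp
  thus ?thesis using e key by (simp add: algebra_simps)
qed

lemma G_inc_ge: assumes "0 \<le> a" "a \<le> b" "b < 1"
  shows "Gf b - Gf a \<ge> (b - a) * ln (1 - b)"
proof -
  define P where "P = 1 - a"
  define Q where "Q = 1 - b"
  have P: "P > 0" and Q: "Q > 0" and PQ: "Q \<le> P" using assms unfolding P_def Q_def by auto
  have "ln (Q / P) \<le> Q / P - 1" using P Q by (intro ln_le_minus_one) simp
  hence "P * ln (Q / P) \<le> P * (Q / P - 1)" using P by (intro mult_left_mono) auto
  moreover have "ln (Q / P) = ln Q - ln P" using P Q by (simp add: ln_div)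
  ultimately have key: "P * ln Q - P * ln P \<le> Q - P" using P by (simp add: algebra_simps)
  have e: "Gf b - Gf a = - Q * ln Q + P * ln P - (P - Q)" unfolding Gf_def P_def Q_def by (simp add: algebra_simps)
  have "(b - a) * ln (1 - b) = (P - Q) * ln Q" unfolding P_def Q_def by simp
  thus ?thesis using e key by (simp add: algebra_simps)
qed

lemma G_0 [simp]: "Gf 0 = 0" unfolding Gf_def by simp

lemma G_bounds: assumes "0 \<le> t" "t \<le> 1"
  shows "Gf t \<le> 0" "- 1 \<le> Gf t" "\<bar>Gf t + 1\<bar> \<le> 3 * sqrt (1 - t)"
proof -
  show "Gf t \<le> 0"
  proof (cases "t = 1")
    case True thus ?thesis unfolding Gf_def by simp
  next
    case False
    thus ?thesis using G_inc_le[of 0 t] assms by simp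
  qed
  have l: "ln (1 - t) \<le> 0" using assms by (cases "t = 1") auto
  have "0 \<le> (1 - t) * (1 - ln (1 - t))" using assms l by (intro mult_nonneg_nonneg) auto
  moreover have e: "Gf t + 1 = (1 - t) * (1 - ln (1 - t))" unfolding Gf_def by (simp add: algebra_simps)
  ultimately show "- 1 \<le> Gf t" by simp
  have a: "\<bar>(1 - t) * ln (1 - t)\<bar> \<le> 2 * sqrt (1 - t)" using assms by (intro xlnx_sqrt) auto
  have b: "1 - t \<le> sqrt (1 - t)" using assms
    by (simp add: real_le_rsqrt power2_eq_square mult_left_le_one_le)
  have "Gf t + 1 = (1 - t) - (1 - t) * ln (1 - t)" unfolding Gf_def by (simp add: algebra_simps)
  thus "\<bar>Gf t + 1\<bar> \<le> 3 * sqrt (1 - t)" using a b assms by linarith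
qed

lemma G_small: assumes "0 \<le> t" "t \<le> 1/2" shows "\<bar>Gf t\<bar> \<le> 2 * t"
proof -
  have a: "\<bar>ln (1 - t)\<bar> \<le> 2 * t" "ln (1 - t) \<le> 0" using ln1m_bound assms by auto
  have "(1 - t) * (- ln (1 - t)) \<le> 1 * (2 * t)" using a assms by (intro mult_mono) auto
  moreover have "0 \<le> (1 - t) * (- ln (1 - t))" using a assms by (intro mult_nonneg_nonneg) auto
  moreover have "Gf t = (1 - t) * (- ln (1 - t)) - t" unfolding Gf_def by (simp add: algebra_simps)
  ultimately show ?thesis using assms by linarith
qed

definition Ssum :: "real \<Rightarrow> real" where
  "Ssum z = z * (\<Sum>j=1..nat \<lfloor>1 / z\<rfloor> - 1. ln (1 - real j * z))"

lemma floor_inv_facts: assumes "0 < z" "z \<le> 1/2"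
  defines "n \<equiv> nat \<lfloor>1 / z\<rfloor>"
  shows "n \<ge> 2" "real n * z \<le> 1" "1 < (real n + 1) * z" "of_int \<lfloor>1 / z\<rfloor> = real n"
proof -
  have f1: "of_int \<lfloor>1 / z\<rfloor> \<le> 1 / z" "1 / z < of_int \<lfloor>1 / z\<rfloor> + 1" by linarith+
  have "1 / z \<ge> 2" using assms by (simp add: field_simps)
  hence "\<lfloor>1 / z\<rfloor> \<ge> 2" by linarith
  thus nn: "n \<ge> 2" unfolding n_def by linarith
  have g0: "0 \<le> \<lfloor>1 / z\<rfloor>" using \<open>\<lfloor>1 / z\<rfloor> \<ge> 2\<close> by linarith
  show rn: "of_int \<lfloor>1 / z\<rfloor> = real n" unfolding n_def by (rule of_nat_nat[OF g0, symmetric])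
  have "of_int \<lfloor>1/z\<rfloor> * z \<le> (1/z) * z" using f1(1) assms by (intro mult_right_mono) auto
  thus "real n * z \<le> 1" using assms unfolding rn[symmetric] by simp
  have "(1/z) * z < (of_int \<lfloor>1/z\<rfloor> + 1) * z" using f1(2) assms by (intro mult_strict_right_mono) auto
  thus "1 < (real n + 1) * z" using assms unfolding rn[symmetric] by simp
qed

lemma Ssum_bounds: assumes "0 < z" "z \<le> 1/2"
  shows "- 1 \<le> Ssum z" "Ssum z \<le> 0" "\<bar>Ssum z + 1\<bar> \<le> 5 * sqrt z"
proof -
  define n where "n = nat \<lfloor>1 / z\<rfloor>"
  note ff = floor_inv_facts[OF assms, folded n_def]
  have S: "Ssum z = (\<Sum>j=1..n - 1. z * ln (1 - real j * z))"
    unfolding Ssum_def n_def by (simp add: sum_distrib_left)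
  have low: "Gf (real n * z) - Gf z \<le> Ssum z"
  proof -
    have "(\<Sum>j=1..n - 1. Gf (real (Suc j) * z) - Gf (real j * z)) \<le> (\<Sum>j=1..n - 1. z * ln (1 - real j * z))"
    proof (rule sum_mono)
      fix j assume j: "j \<in> {1..n - 1}"
      have "real (Suc j) \<le> real n" using j ff by auto
      hence "real (Suc j) * z \<le> real n * z" using assms by (intro mult_right_mono) auto
      hence b1: "real (Suc j) * z \<le> 1" using ff by linarith
      have "Gf (real (Suc j) * z) - Gf (real j * z) \<le> (real (Suc j) * z - real j * z) * ln (1 - real j * z)"
        using b1 assms by (intro G_inc_le) (auto simp: algebra_simps)
      thus "Gf (real (Suc j) * z) - Gf (real j * z) \<le> z * ln (1 - real j * z)" by (simp add: algebra_simps)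
    qed
    moreover have "(\<Sum>j=1..n - 1. Gf (real (Suc j) * z) - Gf (real j * z)) = Gf (real (Suc (n - 1)) * z) - Gf (real 1 * z)"
      by (rule sum_Suc_diff[where f = "\<lambda>i. Gf (real i * z)"]) simp
    moreover have "Suc (n - 1) = n" using ff by simp
    ultimately show ?thesis unfolding S by simp
  qed
  have up: "Ssum z \<le> Gf ((real n - 1) * z)"
  proof -
    have "(\<Sum>j=1..n - 1. z * ln (1 - real j * z)) \<le> (\<Sum>j=1..n - 1. Gf ((real (Suc j) - 1) * z) - Gf ((real j - 1) * z))"
    proof (rule sum_mono)
      fix j assume j: "j \<in> {1..n - 1}"
      have "real j \<le> real n - 1" using j ff by auto
      hence "real j * z \<le> (real n - 1) * z" using assms by (intro mult_right_mono) auto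
      hence b1: "real j * z < 1" using ff by (simp add: algebra_simps)
      have "Gf (real j * z) - Gf ((real j - 1) * z) \<ge> (real j * z - (real j - 1) * z) * ln (1 - real j * z)"
        using b1 j assms by (intro G_inc_ge) (auto simp: algebra_simps)
      thus "z * ln (1 - real j * z) \<le> Gf ((real (Suc j) - 1) * z) - Gf ((real j - 1) * z)" by (simp add: algebra_simps)
    qed
    moreover have "(\<Sum>j=1..n - 1. Gf ((real (Suc j) - 1) * z) - Gf ((real j - 1) * z)) = Gf ((real (Suc (n - 1)) - 1) * z) - Gf ((real 1 - 1) * z)"
      by (rule sum_Suc_diff[where f = "\<lambda>i. Gf ((real i - 1) * z)"]) simp
    moreover have "Suc (n - 1) = n" using ff by simp
    ultimately show ?thesis unfolding S by simp
  qed
  have nz: "0 \<le> 1 - real n * z" "1 - real n * z \<le> z" using ff by (auto simp: algebra_simps)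
  have n1z: "0 \<le> (real n - 1) * z" "(real n - 1) * z \<le> 1" "1 - (real n - 1) * z \<le> 2 * z"
    using ff assms by (auto simp: algebra_simps)
  have g1: "Gf ((real n - 1) * z) \<le> 0" "\<bar>Gf ((real n - 1) * z) + 1\<bar> \<le> 3 * sqrt (1 - (real n - 1) * z)"
    using G_bounds n1z by auto
  have g2: "- 1 \<le> Gf (real n * z)" "\<bar>Gf (real n * z) + 1\<bar> \<le> 3 * sqrt (1 - real n * z)"
    using G_bounds nz ff by auto
  have g3: "Gf z \<le> 0" "\<bar>Gf z\<bar> \<le> 2 * z" using G_bounds G_small assms by auto
  show "- 1 \<le> Ssum z" using low g2 g3 by linarith
  show "Ssum z \<le> 0" using up g1 by linarith
  have s1: "sqrt (1 - (real n - 1) * z) \<le> sqrt (2 * z)" using n1z by simp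
  have s2: "sqrt (2 * z) = sqrt 2 * sqrt z" by (simp add: real_sqrt_mult)
  have s3: "sqrt 2 \<le> (5/3::real)"
  proof -
    have "sqrt 2 \<le> sqrt ((5/3::real)^2)" by (subst real_sqrt_le_iff) (simp add: power2_eq_square)
    thus ?thesis by simp
  qed
  have s4: "3 * sqrt (1 - (real n - 1) * z) \<le> 5 * sqrt z"
  proof -
    have "3 * sqrt (1 - (real n - 1) * z) \<le> 3 * (sqrt 2 * sqrt z)" using s1 s2 by simp
    also have "\<dots> \<le> 3 * ((5/3) * sqrt z)" using s3 assms by (intro mult_left_mono mult_right_mono) auto
    finally show ?thesis by simp
  qed
  have s5: "sqrt (1 - real n * z) \<le> sqrt z" using nz by simp
  have s6: "z \<le> sqrt z" using assms by (simp add: real_le_rsqrt power2_eq_square mult_left_le_one_le)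
  show "\<bar>Ssum z + 1\<bar> \<le> 5 * sqrt z" using low up g1 g2 g3 s4 s5 s6 by (simp add: abs_le_iff)
qed


lemma absD: "\<bar>a::real\<bar> \<le> b \<Longrightarrow> a \<le> b \<and> - a \<le> b" by (simp add: abs_le_iff)

lemma Phi_xl: "Phi z = xl z + xl (z * gaussA z) + Ssum z"
  unfolding Phi_def xl_def Ssum_def by simp

lemma z_gaussA: "z > 0 \<Longrightarrow> z * gaussA z = 1 - of_int \<lfloor>1 / z\<rfloor> * z"
  unfolding gaussA_def by (simp add: algebra_simps)

lemma w_fun_small: assumes "0 \<le> z" "z \<le> 1/2" shows "w_fun z = w0 z"
proof (cases "z < 1/2")
  case True
  hence "frac z = z" using assms by (simp add: frac_eq)
  thus ?thesis unfolding w_fun_def using True by simp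
next
  case False
  hence z: "z = 1/2" using assms by simp
  have fr: "frac (1/2::real) = 1/2" by (simp add: frac_eq)
  show ?thesis unfolding z w_fun_def fr by simp
qed

lemma Phi_bounds: assumes "0 < z" "z \<le> 1/2" shows "\<bar>Phi z\<bar> \<le> 2" "\<bar>Phi z + 1\<bar> \<le> 9 * sqrt z"
proof -
  define n where "n = nat \<lfloor>1 / z\<rfloor>"
  note ff = floor_inv_facts[OF assms, folded n_def]
  have t: "z * gaussA z = 1 - real n * z" using z_gaussA[of z] assms ff by simp
  have t0: "0 \<le> 1 - real n * z" "1 - real n * z \<le> z" using ff by (auto simp: algebra_simps)
  have x1: "\<bar>xl z\<bar> \<le> 1/2" "\<bar>xl z\<bar> \<le> 2 * sqrt z" unfolding xl_def using xlnx_half xlnx_sqrt assms by auto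
  have x2: "\<bar>xl (1 - real n * z)\<bar> \<le> 1/2" "\<bar>xl (1 - real n * z)\<bar> \<le> 2 * sqrt (1 - real n * z)"
    unfolding xl_def using xlnx_half xlnx_sqrt t0 assms by auto
  have s: "sqrt (1 - real n * z) \<le> sqrt z" using t0 by simp
  note S = Ssum_bounds[OF assms]
  have e: "Phi z = xl z + xl (1 - real n * z) + Ssum z" unfolding Phi_xl t ..
  show "\<bar>Phi z\<bar> \<le> 2" unfolding e using absD[OF x1(1)] absD[OF x2(1)] S(1,2) by (intro abs_leI) linarith+
  show "\<bar>Phi z + 1\<bar> \<le> 9 * sqrt z" unfolding e using absD[OF x1(2)] absD[OF x2(2)] absD[OF S(3)] s
    by (intro abs_leI) linarith+
qed

lemma f_fun_bounds: assumes "0 < z" "z \<le> 1/2" shows "\<bar>f_fun z\<bar> \<le> 5" "\<bar>f_fun z - 1\<bar> \<le> 15 * sqrt z"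
proof -
  have w: "\<bar>w_fun z\<bar> \<le> 4 * sqrt z" "\<bar>w_fun z\<bar> \<le> 2" using w0_bounds[of z] w_fun_small[of z] assms by auto
  have w2: "\<bar>z * w_fun (gaussA z)\<bar> \<le> 2 * z"
  proof -
    have "\<bar>z * w_fun (gaussA z)\<bar> = z * \<bar>w_fun (gaussA z)\<bar>" using assms by (simp add: abs_mult)
    also have "\<dots> \<le> z * 2" using w_fun_bound[of "gaussA z"] assms by (intro mult_left_mono) auto
    finally show ?thesis by simp
  qed
  have zs: "z \<le> sqrt z" using assms by (simp add: real_le_rsqrt power2_eq_square mult_left_le_one_le)
  note P = Phi_bounds[OF assms]
  show "\<bar>f_fun z\<bar> \<le> 5" unfolding f_fun_def using absD[OF w(2)] absD[OF w2] absD[OF P(1)] assms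
    by (intro abs_leI) linarith+
  show "\<bar>f_fun z - 1\<bar> \<le> 15 * sqrt z" unfolding f_fun_def using absD[OF w(1)] absD[OF w2] absD[OF P(2)] zs
    by (intro abs_leI) linarith+
qed

lemma f_fun_0 [simp]: "f_fun 0 = 0"
  unfolding f_fun_def Phi_def w_fun_def w0_def by simp

lemma f_fun_half [simp]: "f_fun (1/2) = 0"
proof -
  have fr: "frac (1/2::real) = 1/2" by (simp add: frac_eq)
  have g: "gaussA (1/2) = 0" unfolding gaussA_def by simp
  have "w_fun (1/2) = - ln (1/2)" unfolding w_fun_def fr w0_def by simp
  moreover have "w_fun 0 = 0" unfolding w_fun_def w0_def by simp
  moreover have "Phi (1/2) = ln (1/2)" unfolding Phi_def g by simp
  ultimately show ?thesis unfolding f_fun_def g by simp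
qed

lemma f_tilde_bound: "\<bar>f_tilde y\<bar> \<le> 5"
proof (cases "frac y < 1/2")
  case True
  show ?thesis
  proof (cases "frac y = 0")
    case True thus ?thesis unfolding f_tilde_def True by simp
  next
    case False
    thus ?thesis unfolding f_tilde_def using True f_fun_bounds(1)[of "frac y"] frac_ge_0[of y] by simp
  qed
next
  case False
  thus ?thesis unfolding f_tilde_def using f_fun_bounds(1)[of "1 - frac y"] frac_lt_1[of y] by simp
qed

lemma f_tilde_odd: "f_tilde (- y) = - f_tilde y"
proof (cases "y \<in> \<int>")
  case True
  hence a: "frac y = 0" "frac (- y) = 0" by (simp_all add: frac_neg frac_eq_0_iff)
  show ?thesis unfolding f_tilde_def a by simp
next
  case False
  hence fn: "frac (- y) = 1 - frac y" by (simp add: frac_neg)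
  have "0 < frac y" using False by (simp add: frac_gt_0_iff)
  show ?thesis
  proof (cases "frac y = 1/2")
    case True
    show ?thesis unfolding f_tilde_def fn True by simp
  next
    case False
    thus ?thesis unfolding f_tilde_def fn using frac_lt_1[of y] \<open>0 < frac y\<close>
      by (cases "frac y < 1/2") auto
  qed
qed

lemma f_tilde_small: "0 \<le> y \<Longrightarrow> y < 1/2 \<Longrightarrow> f_tilde y = f_fun y"
  unfolding f_tilde_def by (simp add: frac_eq)


lemma xl_cont' [continuous_intros]: "continuous (at x within s) f \<Longrightarrow> continuous (at x within s) (\<lambda>x. xl (f x))"
  by (rule continuous_within_compose3[OF xl_cont])

definition Phin :: "nat \<Rightarrow> real \<Rightarrow> real" where
  "Phin n z = xl z + xl (1 - real n * z) + z * (\<Sum>j=1..n - 1. ln (1 - real j * z))"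

lemma Phi_Phin: assumes "z > 0" shows "Phi z = Phin (nat \<lfloor>1/z\<rfloor>) z"
proof -
  have g0: "0 \<le> \<lfloor>1/z\<rfloor>" using assms by simp
  have r: "real (nat \<lfloor>1/z\<rfloor>) = real_of_int \<lfloor>1/z\<rfloor>" by (rule of_nat_nat[OF g0])
  have "z * gaussA z = 1 - real (nat \<lfloor>1/z\<rfloor>) * z" unfolding r by (rule z_gaussA[OF assms])
  thus ?thesis unfolding Phi_xl Phin_def Ssum_def by simp
qed

lemma Phin_cont: assumes "\<And>j. j \<in> {1..n - 1} \<Longrightarrow> 1 - real j * z \<noteq> 0" shows "isCont (Phin n) z"
  unfolding Phin_def using assms by (intro continuous_intros) auto

lemma Phin_step: assumes "real (Suc (Suc k)) * z = 1" shows "Phin (Suc k) z = Phin (Suc (Suc k)) z"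
proof -
  have a: "1 - real (Suc k) * z = z" using assms by (simp add: algebra_simps)
  have b: "1 - real (Suc (Suc k)) * z = 0" using assms by simp
  have c: "(\<Sum>j=1..Suc (Suc k) - 1. ln (1 - real j * z)) = (\<Sum>j=1..Suc k - 1. ln (1 - real j * z)) + ln z"
    using a by (simp add: sum.cl_ivl_Suc)
  show ?thesis unfolding Phin_def a b c xl_def by (simp add: algebra_simps)
qed

lemma floor_recip: assumes "y > 0" "of_int a \<le> 1 / y" "1 / y < of_int a + 1" shows "\<lfloor>1 / y\<rfloor> = a"
  using assms by (intro floor_unique) auto

lemma Phi_cont: assumes "0 < z" "z < 1" shows "isCont Phi z"
proof -
  define m where "m = \<lfloor>1/z\<rfloor>"
  have m1: "of_int m \<le> 1/z" "1/z < of_int m + 1" unfolding m_def by linarith+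
  have "1/z > 1" using assms by simp
  hence mpos: "m \<ge> 1" unfolding m_def by linarith
  have mz: "of_int m * z \<le> 1" using m1(1) assms by (simp add: field_simps)
  have mz2: "1 < (of_int m + 1) * z" using m1(2) assms by (simp add: field_simps)
  have nL: "real (nat m) = of_int m" using mpos by simp
  have cL: "isCont (Phin (nat m)) z"
  proof (rule Phin_cont)
    fix j assume j: "j \<in> {1..nat m - 1}"
    hence "real j \<le> of_int m - 1" using mpos by auto
    hence "real j * z \<le> (of_int m - 1) * z" using assms by (intro mult_right_mono) auto
    thus "1 - real j * z \<noteq> 0" using mz assms by (simp add: algebra_simps)
  qed
  have vL: "Phin (nat m) z = Phi z" using Phi_Phin[OF assms(1)] unfolding m_def by simp
  have L: "(Phi \<longlongrightarrow> Phi z) (at_left z)"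
  proof -
    have lt: "1 / (of_int m + 1) < z" using mz2 mpos by (simp add: field_simps)
    have ev: "\<forall>\<^sub>F y in at_left z. y \<in> {1 / (of_int m + 1)<..<z}" by (rule eventually_at_left_real[OF lt])
    have ev2: "\<forall>\<^sub>F y in at_left z. Phin (nat m) y = Phi y"
      using ev
    proof (rule eventually_mono)
      fix y assume y: "y \<in> {1 / (of_int m + 1)<..<z}"
      have yp: "y > 0" using y mpos by (auto intro: less_trans[rotated])
      have "1 / y < of_int m + 1" using y yp mpos by (simp add: field_simps)
      moreover have "1 / z < 1 / y" using y yp by (simp add: field_simps)
      ultimately have "\<lfloor>1/y\<rfloor> = m" using m1 yp by (intro floor_recip) auto
      thus "Phin (nat m) y = Phi y" using Phi_Phin[OF yp] by simp
    qed
    have "(Phin (nat m) \<longlongrightarrow> Phin (nat m) z) (at_left z)"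
      using cL unfolding isCont_def by (rule tendsto_within_subset) simp
    thus ?thesis unfolding vL using tendsto_cong[OF ev2] by simp
  qed
  have R: "(Phi \<longlongrightarrow> Phi z) (at_right z)"
  proof (cases "of_int m = 1/z")
    case False
    hence m2: "of_int m < 1/z" using m1 by simp
    have lt: "z < 1 / of_int m" using m2 mpos assms by (simp add: field_simps)
    have ev: "\<forall>\<^sub>F y in at_right z. y \<in> {z<..<1 / of_int m}" by (rule eventually_at_right_real[OF lt])
    have ev2: "\<forall>\<^sub>F y in at_right z. Phin (nat m) y = Phi y"
      using ev
    proof (rule eventually_mono)
      fix y assume y: "y \<in> {z<..<1 / of_int m}"
      have yp: "y > 0" using y assms by auto
      have "of_int m < 1 / y" using y yp mpos by (simp add: field_simps)
      moreover have "1 / y < 1 / z" using y yp assms by (simp add: field_simps)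
      ultimately have "\<lfloor>1/y\<rfloor> = m" using m1 yp by (intro floor_recip) auto
      thus "Phin (nat m) y = Phi y" using Phi_Phin[OF yp] by simp
    qed
    have "(Phin (nat m) \<longlongrightarrow> Phin (nat m) z) (at_right z)"
      using cL unfolding isCont_def by (rule tendsto_within_subset) simp
    thus ?thesis unfolding vL using tendsto_cong[OF ev2] by simp
  next
    case True
    hence m2: "of_int m * z = 1" using assms by (simp add: field_simps)
    have mge: "m \<ge> 2"
    proof (rule ccontr)
      assume "\<not> m \<ge> 2" hence "m = 1" using mpos by simp
      thus False using m2 assms by simp
    qed
    define k where "k = nat (m - 2)"
    have mk: "nat m = Suc (Suc k)" "nat (m - 1) = Suc k" "of_int m = real (Suc (Suc k))" using mge unfolding k_def by auto
    have lt: "z < 1 / (of_int m - 1)" using m2 mge assms by (simp add: field_simps)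
    have ev: "\<forall>\<^sub>F y in at_right z. y \<in> {z<..<1 / (of_int m - 1)}" by (rule eventually_at_right_real[OF lt])
    have ev2: "\<forall>\<^sub>F y in at_right z. Phin (Suc k) y = Phi y"
      using ev
    proof (rule eventually_mono)
      fix y assume y: "y \<in> {z<..<1 / (of_int m - 1)}"
      have yp: "y > 0" using y assms by auto
      have "of_int m - 1 < 1 / y" using y yp mge by (simp add: field_simps)
      moreover have "1 / y < 1 / z" using y yp assms by (simp add: field_simps)
      ultimately have "\<lfloor>1/y\<rfloor> = m - 1" using True yp by (intro floor_recip) auto
      thus "Phin (Suc k) y = Phi y" using Phi_Phin[OF yp] mk by simp
    qed
    have cR: "isCont (Phin (Suc k)) z"
    proof (rule Phin_cont)
      fix j assume j: "j \<in> {1..Suc k - 1}"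
      hence "real j \<le> of_int m - 2" using mk by auto
      hence "real j * z \<le> (of_int m - 2) * z" using assms by (intro mult_right_mono) auto
      thus "1 - real j * z \<noteq> 0" using m2 assms by (simp add: algebra_simps)
    qed
    have v: "Phin (Suc k) z = Phi z" using Phin_step[of k z] m2 mk vL by simp
    have "(Phin (Suc k) \<longlongrightarrow> Phin (Suc k) z) (at_right z)"
      using cR unfolding isCont_def by (rule tendsto_within_subset) simp
    thus ?thesis unfolding v using tendsto_cong[OF ev2] by simp
  qed
  have "continuous (at_left z) Phi" unfolding continuous_within using L .
  moreover have "continuous (at_right z) Phi" unfolding continuous_within using R .
  ultimately show ?thesis using continuous_at_split by blast
qed

lemma f_fun_alt: "f_fun y = - w_fun y - y * w_fun (1 / y) - Phi y"
proof -
  have "gaussA y = 1 / y + of_int (- \<lfloor>1/y\<rfloor>)" unfolding gaussA_def by simp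
  hence "w_fun (gaussA y) = w_fun (1 / y)" using w_fun_shift[of "1/y" "- \<lfloor>1/y\<rfloor>"] by simp
  thus ?thesis unfolding f_fun_def by simp
qed

lemma w_fun_cont' [continuous_intros]: "continuous (at x within s) f \<Longrightarrow> continuous (at x within s) (\<lambda>x. w_fun (f x))"
  by (rule continuous_within_compose3[OF w_fun_cont])

lemma f_fun_cont: assumes "0 < z" "z < 1" shows "isCont f_fun z"
proof -
  have "isCont (\<lambda>y. - w_fun y - y * w_fun (1 / y) - Phi y) z"
    using assms by (intro continuous_intros continuous_at_compose[OF _ Phi_cont, unfolded o_def] Phi_cont) auto
  thus ?thesis unfolding f_fun_alt[abs_def] .
qed


lemma f_tilde_cont: assumes "0 < r" "r \<le> 1/2" shows "isCont f_tilde r"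
proof (cases "r < 1/2")
  case True
  have ev: "\<forall>\<^sub>F y in nhds r. y \<in> {0<..<1/2}"
    using assms True by (intro eventually_nhds_in_open) auto
  have ev2: "\<forall>\<^sub>F y in nhds r. f_tilde y = f_fun y"
    using ev by (rule eventually_mono) (auto intro: f_tilde_small)
  have "isCont f_fun r" using assms by (intro f_fun_cont) auto
  thus ?thesis using isCont_cong[OF ev2] by simp
next
  case False
  hence r: "r = 1/2" using assms by simp
  have c: "isCont f_fun (1/2)" by (rule f_fun_cont) auto
  have v: "f_tilde (1/2) = 0" unfolding f_tilde_def by (simp add: frac_eq)
  have L: "(f_tilde \<longlongrightarrow> 0) (at_left (1/2))"
  proof -
    have ev: "\<forall>\<^sub>F y in at_left (1/2::real). y \<in> {0<..<1/2}" by (rule eventually_at_left_real) simp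
    have ev2: "\<forall>\<^sub>F y in at_left (1/2::real). f_fun y = f_tilde y"
      using ev by (rule eventually_mono) (auto intro: f_tilde_small[symmetric])
    have "(f_fun \<longlongrightarrow> f_fun (1/2)) (at_left (1/2))"
      using c unfolding isCont_def by (rule tendsto_within_subset) simp
    thus ?thesis using tendsto_cong[OF ev2] by simp
  qed
  have R: "(f_tilde \<longlongrightarrow> 0) (at_right (1/2))"
  proof -
    have ev: "\<forall>\<^sub>F y in at_right (1/2::real). y \<in> {1/2<..<1}" by (rule eventually_at_right_real) simp
    have ev2: "\<forall>\<^sub>F y in at_right (1/2::real). - f_fun (1 - y) = f_tilde y"
      using ev
    proof (rule eventually_mono)
      fix y :: real assume y: "y \<in> {1/2<..<1}"
      hence "frac y = y" by (simp add: frac_eq)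
      thus "- f_fun (1 - y) = f_tilde y" unfolding f_tilde_def using y by simp
    qed
    have c1: "isCont f_fun (1 - 1/2)" using c by simp
    have "isCont (\<lambda>y. f_fun (1 - y)) (1/2)"
      using continuous_at_compose[of "1/2" "\<lambda>y. 1 - y" f_fun] c1 by (simp add: o_def)
    hence c2: "isCont (\<lambda>y. - f_fun (1 - y)) (1/2)" by (intro continuous_intros)
    have "((\<lambda>y. - f_fun (1 - y)) \<longlongrightarrow> - f_fun (1 - 1/2)) (at_right (1/2))"
      using c2 unfolding isCont_def by (rule tendsto_within_subset) simp
    thus ?thesis using tendsto_cong[OF ev2] by simp
  qed
  have "continuous (at_left (1/2)) f_tilde" unfolding continuous_within v using L .
  moreover have "continuous (at_right (1/2)) f_tilde" unfolding continuous_within v using R .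
  ultimately show ?thesis unfolding r using continuous_at_split by blast
qed

lemma sqrt_lim0: "((\<lambda>y. c * sqrt y) \<longlongrightarrow> 0) (at (0::real) within s)"
proof -
  have "((\<lambda>y. c * sqrt y) \<longlongrightarrow> c * sqrt 0) (at (0::real) within s)" by (intro tendsto_intros)
  thus ?thesis by simp
qed

lemma f_tilde_right0: "(f_tilde \<longlongrightarrow> 1) (at_right 0)"
proof -
  have ev: "\<forall>\<^sub>F y in at_right (0::real). y \<in> {0<..<1/2}" by (rule eventually_at_right_real) simp
  have ev2: "\<forall>\<^sub>F y in at_right (0::real). norm (f_tilde y - 1) \<le> 15 * sqrt y"
    using ev
  proof (rule eventually_mono)
    fix y :: real assume y: "y \<in> {0<..<1/2}"
    thus "norm (f_tilde y - 1) \<le> 15 * sqrt y" using f_tilde_small[of y] f_fun_bounds(2)[of y] by simp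
  qed
  have "((\<lambda>y. f_tilde y - 1) \<longlongrightarrow> 0) (at_right 0)" by (rule Lim_null_comparison[OF ev2 sqrt_lim0])
  thus ?thesis by (simp add: LIM_zero_iff)
qed

lemma f_tilde_left0: "(f_tilde \<longlongrightarrow> -1) (at_left 0)"
proof -
  have ev: "\<forall>\<^sub>F y in at_left (0::real). y \<in> {-1/2<..<0}" by (rule eventually_at_left_real) simp
  have ev2: "\<forall>\<^sub>F y in at_left (0::real). norm (f_tilde y - (-1)) \<le> 15 * sqrt (- y)"
    using ev
  proof (rule eventually_mono)
    fix y :: real assume y: "y \<in> {-1/2<..<0}"
    have "f_tilde y = - f_fun (- y)" using f_tilde_odd[of "-y"] f_tilde_small[of "-y"] y by simp
    thus "norm (f_tilde y - (-1)) \<le> 15 * sqrt (- y)" using f_fun_bounds(2)[of "-y"] y by (simp add: abs_minus_commute)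
  qed
  have l: "((\<lambda>y. 15 * sqrt (- y)) \<longlongrightarrow> 0) (at_left (0::real))"
  proof -
    have "((\<lambda>y. 15 * sqrt (- y)) \<longlongrightarrow> 15 * sqrt (- 0)) (at_left (0::real))" by (intro tendsto_intros)
    thus ?thesis by simp
  qed
  have "((\<lambda>y. f_tilde y - (-1)) \<longlongrightarrow> 0) (at_left 0)" by (rule Lim_null_comparison[OF ev2 l])
  thus ?thesis by (simp only: LIM_zero_iff)
qed


definition sig :: "real \<Rightarrow> real" where "sig y = sr (1 / \<bar>y\<bar>)"

lemma sig_even: "sig (- y) = sig y" unfolding sig_def by simp

lemma sig_bound: "\<bar>sig y\<bar> \<le> 1/2" unfolding sig_def by (rule abs_sr_le)

fun Hf :: "nat \<Rightarrow> real \<Rightarrow> real" where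
  "Hf 0 y = f_tilde y"
| "Hf (Suc m) y = f_tilde y - y * Hf m (sig y)"

lemma Hf_odd: "Hf m (- y) = - Hf m y"
  by (induction m) (simp_all add: f_tilde_odd sig_even)

lemma Hf_bound: "\<bar>y\<bar> \<le> 1/2 \<Longrightarrow> \<bar>Hf m y\<bar> \<le> 10"
proof (induction m arbitrary: y)
  case 0 thus ?case using f_tilde_bound[of y] by simp
next
  case (Suc m)
  have h: "\<bar>Hf m (sig y)\<bar> \<le> 10" using Suc.IH sig_bound by blast
  have "\<bar>y * Hf m (sig y)\<bar> \<le> 1/2 * 10" unfolding abs_mult
    using Suc.prems h by (intro mult_mono) auto
  thus ?case using f_tilde_bound[of y] by simp
qed

definition Y :: "real \<Rightarrow> nat \<Rightarrow> real" where "Y x k = (sig ^^ k) x"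

lemma Y_0 [simp]: "Y x 0 = x" unfolding Y_def by simp
lemma Y_Suc: "Y x (Suc k) = Y (sig x) k" unfolding Y_def by (simp only: funpow_Suc_right comp_def)
lemma Y_Suc': "Y x (Suc k) = sig (Y x k)" unfolding Y_def by simp

lemma nicf_Y: assumes "0 \<le> x" shows "nicf_x x k = \<bar>Y x k\<bar> \<and> nicf_eps x k * nicf_x x k = Y x k"
proof (induction k)
  case 0 thus ?case using assms unfolding nicf_x_def nicf_eps_def by simp
next
  case (Suc k)
  have xk: "nicf_x x k = \<bar>Y x k\<bar>" using Suc by simp
  have a: "nicf_x x (Suc k) = A_half (nicf_x x k)" unfolding nicf_x_def by simp
  have b: "sr (1 / nicf_x x k) = Y x (Suc k)" unfolding Y_Suc' sig_def xk ..
  have "nicf_x x (Suc k) = \<bar>Y x (Suc k)\<bar>" unfolding a A_half_sr b ..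
  moreover have "nicf_eps x (Suc k) * nicf_x x (Suc k) = Y x (Suc k)"
  proof -
    have "nicf_eps x (Suc k) = sgn (sr (1 / nicf_x x k))"
      unfolding nicf_eps_def nicf_a_def sr_def by simp
    thus ?thesis unfolding a A_half_sr b by (simp add: sgn_mult_abs)
  qed
  ultimately show ?case by simp
qed

lemma dterm_Y: assumes "0 \<le> x" shows "dterm x i = (-1) ^ i * (\<Prod>k<i. Y x k) * f_tilde (Y x i)"
proof -
  have e: "\<And>k. nicf_eps x k * nicf_x x k = Y x k" using nicf_Y[OF assms] by blast
  show ?thesis unfolding dterm_def beta_shift_def e ..
qed

lemma sum_Y_Hf: "(\<Sum>i\<le>M. (-1) ^ i * (\<Prod>k<i. Y x k) * f_tilde (Y x i)) = Hf M x"
proof (induction M arbitrary: x)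
  case 0 thus ?case by simp
next
  case (Suc M)
  have "(\<Sum>i\<le>Suc M. (-1) ^ i * (\<Prod>k<i. Y x k) * f_tilde (Y x i))
      = f_tilde x + (\<Sum>i\<le>M. (-1) ^ Suc i * (\<Prod>k<Suc i. Y x k) * f_tilde (Y x (Suc i)))"
    by (subst sum.atMost_Suc_shift) simp
  also have "(\<Sum>i\<le>M. (-1) ^ Suc i * (\<Prod>k<Suc i. Y x k) * f_tilde (Y x (Suc i)))
      = (\<Sum>i\<le>M. - x * ((-1) ^ i * (\<Prod>k<i. Y (sig x) k) * f_tilde (Y (sig x) i)))"
    by (intro sum.cong refl) (simp del: prod.lessThan_Suc add: prod.lessThan_Suc_shift Y_Suc)
  also have "\<dots> = - x * (\<Sum>i\<le>M. (-1) ^ i * (\<Prod>k<i. Y (sig x) k) * f_tilde (Y (sig x) i))"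
    by (rule sum_distrib_left[symmetric])
  also have "\<dots> = - x * Hf M (sig x)" by (simp only: Suc.IH)
  finally show ?case by simp
qed

lemma DeltaM_Hf: "0 \<le> x \<Longrightarrow> DeltaM M x = Hf M x"
  unfolding DeltaM_def using dterm_Y sum_Y_Hf by simp

lemma Y_bound: "\<bar>x\<bar> \<le> 1/2 \<Longrightarrow> \<bar>Y x k\<bar> \<le> 1/2"
proof (cases k)
  case (Suc j) thus ?thesis using sig_bound[of "Y x j"] by (simp add: Y_Suc')
qed simp

lemma prod_Y_bound: "\<bar>x\<bar> \<le> 1/2 \<Longrightarrow> \<bar>\<Prod>k<i. Y x k\<bar> \<le> (1/2) ^ i"
proof -
  assume x: "\<bar>x\<bar> \<le> 1/2"
  have "\<bar>\<Prod>k<i. Y x k\<bar> = (\<Prod>k<i. \<bar>Y x k\<bar>)" by (rule abs_prod)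
  also have "\<dots> \<le> (\<Prod>k<i. (1/2::real))" using Y_bound[OF x] by (intro prod_mono) auto
  finally show ?thesis by simp
qed

lemma dterm_bound: assumes "0 \<le> x" "x \<le> 1/2" shows "\<bar>dterm x i\<bar> \<le> 5 * (1/2) ^ i"
proof -
  have "\<bar>dterm x i\<bar> = \<bar>\<Prod>k<i. Y x k\<bar> * \<bar>f_tilde (Y x i)\<bar>"
    unfolding dterm_Y[OF assms(1)] by (simp add: abs_mult)
  also have "\<dots> \<le> (1/2) ^ i * 5" using prod_Y_bound[of x i] f_tilde_bound[of "Y x i"] assms
    by (intro mult_mono) auto
  finally show ?thesis by simp
qed

lemma part2: "uniformly_convergent_on ({0<..<1/2} - \<rat>) (\<lambda>n x. \<Sum>i<n. dterm x i)"
proof (rule Weierstrass_m_test')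
  fix n x assume "x \<in> {0<..<1/2::real} - \<rat>"
  thus "norm (dterm x n) \<le> 5 * (1/2) ^ n" using dterm_bound[of x n] by simp
next
  show "summable (\<lambda>n. 5 * (1/2::real) ^ n)" by (intro summable_mult summable_geometric) simp
qed


definition Irr :: "real set" where "Irr = - \<rat>"

abbreviation Rt :: "real \<Rightarrow> real filter" where "Rt r \<equiv> at r within (Irr \<inter> {r<..})"
abbreviation Lt :: "real \<Rightarrow> real filter" where "Lt r \<equiv> at r within (Irr \<inter> {..<r})"

lemma irr_dense: fixes a b :: real assumes "a < b" shows "\<exists>x. x \<notin> \<rat> \<and> a < x \<and> x < b"
proof (rule ccontr)
  assume "\<not> ?thesis"
  hence "{a<..<b} \<subseteq> \<rat>" by auto
  hence "countable {a<..<b}" using countable_rat countable_subset by blast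
  thus False using uncountable_open_interval[of a b] assms by simp
qed

lemma Rt_nontriv: "Rt r \<noteq> bot"
  unfolding not_trivial_limit_within_ball
proof (intro allI impI)
  fix e :: real assume e: "e > 0"
  obtain x where x: "x \<notin> \<rat>" "r < x" "x < r + e" using irr_dense[of r "r + e"] e by auto
  hence "x \<in> Irr \<inter> {r<..} \<inter> ball r e - {r}" unfolding Irr_def by (auto simp: dist_norm)
  thus "Irr \<inter> {r<..} \<inter> ball r e - {r} \<noteq> {}" by blast
qed

lemma Lt_nontriv: "Lt r \<noteq> bot"
  unfolding not_trivial_limit_within_ball
proof (intro allI impI)
  fix e :: real assume e: "e > 0"
  obtain x where x: "x \<notin> \<rat>" "r - e < x" "x < r" using irr_dense[of "r - e" r] e by auto
  hence "x \<in> Irr \<inter> {..<r} \<inter> ball r e - {r}" unfolding Irr_def by (auto simp: dist_norm)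
  thus "Irr \<inter> {..<r} \<inter> ball r e - {r} \<noteq> {}" by blast
qed

lemma Rt_le: "Rt r \<le> at_right r" by (rule at_le) auto
lemma Lt_le: "Lt r \<le> at_left r" by (rule at_le) auto

lemma ev_Rt: "(\<And>y. y \<in> Irr \<Longrightarrow> y > r \<Longrightarrow> P y) \<Longrightarrow> eventually P (Rt r)"
  unfolding eventually_at_filter by (rule always_eventually) auto

lemma ev_Lt: "(\<And>y. y \<in> Irr \<Longrightarrow> y < r \<Longrightarrow> P y) \<Longrightarrow> eventually P (Lt r)"
  unfolding eventually_at_filter by (rule always_eventually) auto

lemma Irr_minus: "(- y \<in> Irr) = (y \<in> Irr)"
  unfolding Irr_def using Rats_minus_iff by auto

lemma filterlim_uminus_RL: "filterlim uminus (Rt a) (Lt (- a))"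
proof (rule filterlim_at_withinI)
  show "(uminus \<longlongrightarrow> a) (Lt (- a))"
    using tendsto_minus[OF tendsto_ident_at[of "-a" "Irr \<inter> {..< -a}"]] by simp
  show "\<forall>\<^sub>F x in Lt (- a). - x \<in> Irr \<inter> {a<..} - {a}"
    by (rule ev_Lt) (auto simp: Irr_minus)
qed

lemma filterlim_uminus_LR: "filterlim uminus (Lt a) (Rt (- a))"
proof (rule filterlim_at_withinI)
  show "(uminus \<longlongrightarrow> a) (Rt (- a))"
    using tendsto_minus[OF tendsto_ident_at[of "-a" "Irr \<inter> {-a<..}"]] by simp
  show "\<forall>\<^sub>F x in Rt (- a). - x \<in> Irr \<inter> {..<a} - {a}"
    by (rule ev_Rt) (auto simp: Irr_minus)
qed

lemma odd_R2L: assumes "(Hf m \<longlongrightarrow> L) (Rt a)" shows "(Hf m \<longlongrightarrow> - L) (Lt (- a))"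
proof -
  have "((\<lambda>y. Hf m (- y)) \<longlongrightarrow> L) (Lt (- a))"
    using filterlim_compose[OF assms filterlim_uminus_RL] by simp
  hence "((\<lambda>y. - Hf m (- y)) \<longlongrightarrow> - L) (Lt (- a))" by (rule tendsto_minus)
  thus ?thesis by (simp add: Hf_odd)
qed

lemma odd_L2R: assumes "(Hf m \<longlongrightarrow> L) (Lt a)" shows "(Hf m \<longlongrightarrow> - L) (Rt (- a))"
proof -
  have "((\<lambda>y. Hf m (- y)) \<longlongrightarrow> L) (Rt (- a))"
    using filterlim_compose[OF assms filterlim_uminus_LR] by simp
  hence "((\<lambda>y. - Hf m (- y)) \<longlongrightarrow> - L) (Rt (- a))" by (rule tendsto_minus)
  thus ?thesis by (simp add: Hf_odd)
qed

lemma sig_pos: "y > 0 \<Longrightarrow> sig y = 1 / y - of_int \<lfloor>1 / y + 1/2\<rfloor>"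
  unfolding sig_def sr_def by simp

lemma Irr_recip_diff: assumes "y \<in> Irr" shows "1 / y - of_int k \<in> Irr"
proof -
  have "1 / y - of_int k \<notin> \<rat>"
  proof
    assume "1 / y - of_int k \<in> \<rat>"
    hence "(1 / y - of_int k) + of_int k \<in> \<rat>" by (intro Rats_add) auto
    hence "1 / y \<in> \<rat>" by simp
    hence "1 / (1 / y) \<in> \<rat>" by (rule Rats_divide[OF Rats_1])
    hence "y \<in> \<rat>" by simp
    thus False using assms unfolding Irr_def by simp
  qed
  thus ?thesis unfolding Irr_def by simp
qed


lemma Hf_0_fun: "Hf 0 = f_tilde" by (rule ext) simp
lemma Hf_Suc_fun: "Hf (Suc k) = (\<lambda>y. f_tilde y - y * Hf k (sig y))" by (rule ext) simp

lemma sig_right: assumes r: "0 < r" "r \<le> 1/2"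
  defines "K \<equiv> \<lceil>1 / r + 1/2\<rceil> - 1"
  shows "filterlim sig (Lt (1 / r - of_int K)) (Rt r)"
proof -
  define t0 where "t0 = 1 / r"
  have t0: "t0 \<ge> 2" using r unfolding t0_def by (simp add: field_simps)
  have K1: "of_int K < t0 + 1/2" "t0 + 1/2 \<le> of_int K + 1"
    unfolding K_def t0_def using ceiling_correct[of "1/r + 1/2"] by linarith+
  have Kp: "of_int K - 1/2 > (0::real)" using K1 t0 by linarith
  define b :: real where "b = 1 / (of_int K - 1/2)"
  have rb: "r < b" unfolding b_def using Kp K1 r unfolding t0_def by (simp add: field_simps)
  have ev: "\<forall>\<^sub>F y in Rt r. y \<in> {r<..<b}"
    by (rule filter_leD[OF Rt_le eventually_at_right_real[OF rb]])
  have ev2: "\<forall>\<^sub>F y in Rt r. y \<in> {r<..<b} \<and> y \<in> Irr"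
    using ev ev_Rt[of r "\<lambda>y. y \<in> Irr"] by (auto elim: eventually_elim2)
  have key: "sig y = 1 / y - of_int K" if y: "y \<in> {r<..<b}" for y
  proof -
    have yp: "y > 0" using y r by auto
    have "1 / y < t0" using y yp r unfolding t0_def by (simp add: field_simps)
    moreover have "1 / y > of_int K - 1/2" using y yp Kp unfolding b_def by (simp add: field_simps)
    ultimately have "\<lfloor>1 / y + 1/2\<rfloor> = K" using K1 by (intro floor_unique) auto
    thus ?thesis using sig_pos[OF yp] by simp
  qed
  have ev3: "\<forall>\<^sub>F y in Rt r. 1 / y - of_int K = sig y"
    using ev by (rule eventually_mono) (simp add: key)
  have "((\<lambda>y. 1 / y - of_int K) \<longlongrightarrow> 1 / r - of_int K) (Rt r)"
    using r by (intro tendsto_intros) auto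
  hence lim: "(sig \<longlongrightarrow> 1 / r - of_int K) (Rt r)" using tendsto_cong[OF ev3] by simp
  show ?thesis
  proof (rule filterlim_at_withinI[OF lim])
    show "\<forall>\<^sub>F y in Rt r. sig y \<in> Irr \<inter> {..<1 / r - of_int K} - {1 / r - of_int K}"
      using ev2
    proof (rule eventually_mono)
      fix y assume y: "y \<in> {r<..<b} \<and> y \<in> Irr"
      have yp: "y > 0" using y r by auto
      have "1 / y < 1 / r" using y yp r by (simp add: field_simps)
      thus "sig y \<in> Irr \<inter> {..<1 / r - of_int K} - {1 / r - of_int K}"
        using key[of y] y Irr_recip_diff[of y K] by auto
    qed
  qed
qed

lemma sig_left: assumes r: "0 < r" "r \<le> 1/2"
  shows "filterlim sig (Rt (sr (1 / r))) (Lt r)"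
proof -
  define t0 where "t0 = 1 / r"
  define K where "K = \<lfloor>t0 + 1/2\<rfloor>"
  have t0: "t0 \<ge> 2" using r unfolding t0_def by (simp add: field_simps)
  have K1: "of_int K \<le> t0 + 1/2" "t0 + 1/2 < of_int K + 1"
    unfolding K_def using floor_correct[of "t0 + 1/2"] by linarith+
  have Kp: "of_int K + 1/2 > (0::real)" using K1 t0 by linarith
  have srt: "sr t0 = t0 - of_int K" unfolding sr_def K_def ..
  define b :: real where "b = 1 / (of_int K + 1/2)"
  have rb: "b < r" unfolding b_def using Kp K1 r unfolding t0_def by (simp add: field_simps)
  have bp: "b > 0" unfolding b_def using Kp by simp
  have ev: "\<forall>\<^sub>F y in Lt r. y \<in> {b<..<r}"
    by (rule filter_leD[OF Lt_le eventually_at_left_real[OF rb]])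
  have ev2: "\<forall>\<^sub>F y in Lt r. y \<in> {b<..<r} \<and> y \<in> Irr"
    using ev ev_Lt[of r "\<lambda>y. y \<in> Irr"] by (auto elim: eventually_elim2)
  have key: "sig y = 1 / y - of_int K" if y: "y \<in> {b<..<r}" for y
  proof -
    have yp: "y > 0" using y bp by auto
    have "1 / y > t0" using y yp r unfolding t0_def by (simp add: field_simps)
    moreover have "1 / y < of_int K + 1/2" using y yp Kp unfolding b_def by (simp add: field_simps)
    ultimately have "\<lfloor>1 / y + 1/2\<rfloor> = K" using K1 by (intro floor_unique) auto
    thus ?thesis using sig_pos[OF yp] by simp
  qed
  have ev3: "\<forall>\<^sub>F y in Lt r. 1 / y - of_int K = sig y"
    using ev by (rule eventually_mono) (simp add: key)
  have "((\<lambda>y. 1 / y - of_int K) \<longlongrightarrow> 1 / r - of_int K) (Lt r)"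
    using r by (intro tendsto_intros) auto
  hence lim: "(sig \<longlongrightarrow> sr (1 / r)) (Lt r)" using tendsto_cong[OF ev3] srt unfolding t0_def by simp
  show ?thesis
  proof (rule filterlim_at_withinI[OF lim])
    show "\<forall>\<^sub>F y in Lt r. sig y \<in> Irr \<inter> {sr (1 / r)<..} - {sr (1 / r)}"
      using ev2
    proof (rule eventually_mono)
      fix y assume y: "y \<in> {b<..<r} \<and> y \<in> Irr"
      have yp: "y > 0" using y bp by auto
      have "1 / y > 1 / r" using y yp r by (simp add: field_simps)
      thus "sig y \<in> Irr \<inter> {sr (1 / r)<..} - {sr (1 / r)}"
        using key[of y] y Irr_recip_diff[of y K] srt unfolding t0_def by auto
    qed
  qed
qed

lemma small_prod_lim: "((\<lambda>y. y * Hf m (sig y)) \<longlongrightarrow> 0) (at 0 within s)"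
proof (rule Lim_null_comparison)
  show "\<forall>\<^sub>F y in at 0 within s. norm (y * Hf m (sig y)) \<le> 10 * \<bar>y\<bar>"
  proof (rule always_eventually, intro allI)
    fix y :: real
    have "\<bar>Hf m (sig y)\<bar> \<le> 10" using Hf_bound sig_bound by blast
    thus "norm (y * Hf m (sig y)) \<le> 10 * \<bar>y\<bar>" by (simp add: abs_mult mult_left_mono mult.commute)
  qed
  have "((\<lambda>y::real. 10 * \<bar>y\<bar>) \<longlongrightarrow> 10 * \<bar>0\<bar>) (at 0 within s)" by (intro tendsto_intros)
  thus "((\<lambda>y::real. 10 * \<bar>y\<bar>) \<longlongrightarrow> 0) (at 0 within s)" by simp
qed

lemma Rlim0: "(Hf m \<longlongrightarrow> 1) (Rt 0)"
proof (cases m)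
  case 0 thus ?thesis using tendsto_mono[OF Rt_le f_tilde_right0] by (simp add: Hf_0_fun)
next
  case (Suc k)
  have "((\<lambda>y. f_tilde y - y * Hf k (sig y)) \<longlongrightarrow> 1 - 0) (Rt 0)"
    by (intro tendsto_diff tendsto_mono[OF Rt_le f_tilde_right0] small_prod_lim)
  thus ?thesis using Suc by (simp add: Hf_Suc_fun)
qed

lemma Llim0: "(Hf m \<longlongrightarrow> -1) (Lt 0)"
proof (cases m)
  case 0 thus ?thesis using tendsto_mono[OF Lt_le f_tilde_left0] by (simp add: Hf_0_fun)
next
  case (Suc k)
  have "((\<lambda>y. f_tilde y - y * Hf k (sig y)) \<longlongrightarrow> -1 - 0) (Lt 0)"
    by (intro tendsto_diff tendsto_mono[OF Lt_le f_tilde_left0] small_prod_lim)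
  thus ?thesis using Suc by (simp add: Hf_Suc_fun)
qed

lemma f_tilde_lim: "0 < r \<Longrightarrow> r \<le> 1/2 \<Longrightarrow> (f_tilde \<longlongrightarrow> f_tilde r) (at r within s)"
  using f_tilde_cont[of r] unfolding isCont_def by (rule tendsto_within_subset) auto

lemma Lhalf: "(Hf m \<longlongrightarrow> (if m = 0 then 0 else - 1/2)) (Lt (1/2))"
proof -
  have v: "f_tilde (1/2) = 0" unfolding f_tilde_def by (simp add: frac_eq)
  show ?thesis
  proof (cases m)
    case 0 thus ?thesis using f_tilde_lim[of "1/2" "Irr \<inter> {..<1/2}"] v by (simp add: Hf_0_fun)
  next
    case (Suc k)
    have s2: "sr (1 / (1/2)) = 0" unfolding sr_def by simp
    have fl: "filterlim sig (Rt 0) (Lt (1/2))" using sig_left[of "1/2"] s2 by simp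
    have h: "((\<lambda>y. Hf k (sig y)) \<longlongrightarrow> 1) (Lt (1/2))" by (rule filterlim_compose[OF Rlim0 fl])
    have "((\<lambda>y. f_tilde y - y * Hf k (sig y)) \<longlongrightarrow> f_tilde (1/2) - 1/2 * 1) (Lt (1/2))"
      by (intro tendsto_intros h f_tilde_lim) auto
    thus ?thesis using Suc v by (simp add: Hf_Suc_fun)
  qed
qed


lemma A_half_0 [simp]: "A_half 0 = 0" unfolding A_half_def by simp

lemma A_half_range: "0 \<le> A_half z" "A_half z \<le> 1/2"
  unfolding A_half_sr using abs_sr_le by auto

lemma A_half_funpow_0: "(A_half ^^ i) 0 = 0"
  by (induction i) auto

lemma coprime_shift: fixes p q :: int assumes "coprime p q" shows "coprime (q - K * p) p"
proof (rule coprimeI)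
  fix d assume d: "d dvd q - K * p" "d dvd p"
  have "d dvd (q - K * p) + K * p" using d by (intro dvd_add) auto
  hence "d dvd q" by simp
  thus "is_unit d" using coprime_common_divisor[OF assms d(2)] by simp
qed

lemma A_half_frac: fixes p q :: int assumes "0 < p"
  shows "A_half (of_int p / of_int q) = \<bar>of_int (q - \<lfloor>of_int q / of_int p + 1/2 :: real\<rfloor> * p) / of_int p\<bar>"
proof -
  have "1 / (of_int p / of_int q) = (of_int q / of_int p :: real)" by simp
  moreover have "(of_int q / of_int p :: real) - of_int \<lfloor>of_int q / of_int p + 1/2 :: real\<rfloor>
      = of_int (q - \<lfloor>of_int q / of_int p + 1/2 :: real\<rfloor> * p) / of_int p"
    using assms by (simp add: field_simps)
  ultimately show ?thesis unfolding A_half_def by simp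
qed

lemma nicf_terminates_aux:
  "\<forall>p q. int n = q \<longrightarrow> 0 < q \<longrightarrow> 0 \<le> p \<longrightarrow> 2 * p \<le> q \<longrightarrow> (\<exists>i\<ge>1. (A_half ^^ i) (of_int p / of_int q) = 0)"
proof (induction n rule: less_induct)
  case (less n)
  show ?case
  proof (intro allI impI)
    fix p q :: int assume h: "int n = q" "0 < q" "0 \<le> p" "2 * p \<le> q"
    show "\<exists>i\<ge>1. (A_half ^^ i) (of_int p / of_int q) = 0"
    proof (cases "p = 0")
      case True thus ?thesis by (intro exI[of _ 1]) simp
    next
      case False
      hence pp: "0 < p" using h by simp
      define K where "K = \<lfloor>of_int q / of_int p + 1/2 :: real\<rfloor>"
      define p' where "p' = \<bar>q - K * p\<bar>"
      have A: "A_half (of_int p / of_int q) = of_int p' / of_int p"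
        using A_half_frac[OF pp, of q] pp unfolding K_def[symmetric] p'_def by simp
      have "A_half (of_int p / of_int q) \<le> 1/2" by (rule A_half_range)
      hence "of_int p' / of_int p \<le> (1/2::real)" using A by simp
      hence "2 * p' \<le> p" using pp by (simp add: field_simps)
      moreover have "nat p < n" using h pp by linarith
      moreover have "0 \<le> p'" unfolding p'_def by simp
      ultimately have "\<exists>i\<ge>1. (A_half ^^ i) (of_int p' / of_int p) = 0"
        using less.IH[of "nat p"] pp by simp
      then obtain i where i: "i \<ge> 1" "(A_half ^^ i) (of_int p' / of_int p) = 0" by blast
      have "(A_half ^^ Suc i) (of_int p / of_int q) = 0"
        unfolding funpow_Suc_right comp_def A using i by simp
      thus ?thesis by (intro exI[of _ "Suc i"]) simp
    qed
  qed
qed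

lemma nicf_terminates: assumes "z \<in> \<rat>" "0 \<le> z" "z \<le> 1/2" shows "\<exists>i\<ge>1. (A_half ^^ i) z = 0"
proof -
  obtain p q where pq: "0 < q" "z = of_int p / of_int q" using assms(1) by (rule Rats_cases') auto
  have "0 \<le> p" using pq assms by (simp add: zero_le_divide_iff)
  moreover have "2 * p \<le> q"
  proof -
    have "of_int p = z * of_int q" using pq by simp
    moreover have "2 * z * of_int q \<le> 1 * (of_int q :: real)" using assms(3) pq(1) by (intro mult_right_mono) auto
    ultimately have "real_of_int (2 * p) \<le> real_of_int q" by simp
    thus ?thesis by linarith
  qed
  ultimately show ?thesis using nicf_terminates_aux[of "nat q"] pq by auto
qed

lemma depth_le_iff: assumes "\<exists>i\<ge>1. (A_half ^^ i) z = 0"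
  shows "nicf_depth z \<le> k \<longleftrightarrow> (\<exists>i. 1 \<le> i \<and> i \<le> k \<and> (A_half ^^ i) z = 0)"
proof
  assume "nicf_depth z \<le> k"
  moreover have "1 \<le> nicf_depth z \<and> (A_half ^^ nicf_depth z) z = 0"
    unfolding nicf_depth_def by (rule LeastI_ex) (use assms in auto)
  ultimately show "\<exists>i. 1 \<le> i \<and> i \<le> k \<and> (A_half ^^ i) z = 0" by auto
next
  assume "\<exists>i. 1 \<le> i \<and> i \<le> k \<and> (A_half ^^ i) z = 0"
  then obtain i where "1 \<le> i" "i \<le> k" "(A_half ^^ i) z = 0" by auto
  hence "nicf_depth z \<le> i" unfolding nicf_depth_def by (intro Least_le) auto
  thus "nicf_depth z \<le> k" using \<open>i \<le> k\<close> by simp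
qed

lemma A_half_rat: "z \<in> \<rat> \<Longrightarrow> A_half z \<in> \<rat>"
  unfolding A_half_def by (intro Rats_abs_iff[THEN iffD2] Rats_diff Rats_divide Rats_of_int) auto

lemma depth_step: assumes "z \<in> \<rat>" "0 \<le> z" "z \<le> 1/2"
  shows "nicf_depth z \<le> Suc m \<longleftrightarrow> (A_half z = 0 \<or> nicf_depth (A_half z) \<le> m)"
proof -
  have e1: "\<exists>i\<ge>1. (A_half ^^ i) z = 0" by (rule nicf_terminates[OF assms])
  have e2: "\<exists>i\<ge>1. (A_half ^^ i) (A_half z) = 0"
    by (rule nicf_terminates) (use A_half_rat[OF assms(1)] A_half_range in auto)
  have fp: "\<And>j. (A_half ^^ Suc j) z = (A_half ^^ j) (A_half z)" by (simp only: funpow_Suc_right comp_def)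
  show ?thesis
  proof
    assume "nicf_depth z \<le> Suc m"
    then obtain i where i: "1 \<le> i" "i \<le> Suc m" "(A_half ^^ i) z = 0" using depth_le_iff[OF e1] by auto
    show "A_half z = 0 \<or> nicf_depth (A_half z) \<le> m"
    proof (cases "i = 1")
      case True thus ?thesis using i by simp
    next
      case False
      then obtain j where j: "i = Suc j" "j \<ge> 1" using i by (cases i) auto
      hence "(A_half ^^ j) (A_half z) = 0" using i fp by simp
      hence "nicf_depth (A_half z) \<le> m" using depth_le_iff[OF e2] j i by auto
      thus ?thesis by simp
    qed
  next
    assume "A_half z = 0 \<or> nicf_depth (A_half z) \<le> m"
    thus "nicf_depth z \<le> Suc m"
    proof
      assume "A_half z = 0"
      thus ?thesis using depth_le_iff[OF e1, of "Suc m"] by (intro iffD2[OF depth_le_iff[OF e1]] exI[of _ 1]) auto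
    next
      assume "nicf_depth (A_half z) \<le> m"
      then obtain j where j: "1 \<le> j" "j \<le> m" "(A_half ^^ j) (A_half z) = 0" using depth_le_iff[OF e2] by auto
      show ?thesis using j fp by (intro iffD2[OF depth_le_iff[OF e1]] exI[of _ "Suc j"]) auto
    qed
  qed
qed

lemma depth_ge1: assumes "z \<in> \<rat>" "0 \<le> z" "z \<le> 1/2" shows "\<not> nicf_depth z \<le> 0"
  using depth_le_iff[OF nicf_terminates[OF assms], of 0] by auto

lemma depth_half: "nicf_depth (1/2) = 1"
proof -
  have "A_half (1/2) = 0" unfolding A_half_def by simp
  hence "nicf_depth (1/2) \<le> 1" unfolding nicf_depth_def by (intro Least_le) simp
  moreover have "\<not> nicf_depth (1/2) \<le> 0" by (rule depth_ge1) auto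
  ultimately show ?thesis by simp
qed


definition J :: "nat \<Rightarrow> int \<Rightarrow> int \<Rightarrow> real" where
  "J m p q = (if p = 0 then 2 else if nicf_depth \<bar>of_int p / of_int q\<bar> \<le> m then 2 / of_int q else 0)"

definition PP :: "nat \<Rightarrow> real \<Rightarrow> bool" where
  "PP m r \<longleftrightarrow> (\<exists>Lp Lm. (Hf m \<longlongrightarrow> Lp) (Rt r) \<and> (Hf m \<longlongrightarrow> Lm) (Lt r)
     \<and> (r \<notin> \<rat> \<longrightarrow> Lp = Hf m r \<and> Lm = Hf m r)
     \<and> (\<forall>p q. 0 < q \<longrightarrow> coprime p q \<longrightarrow> r = of_int p / of_int q \<longrightarrow> Lp - Lm = J m p q))"

lemma PP_zero: "PP m 0"
  unfolding PP_def
proof (intro exI conjI)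
  show "(Hf m \<longlongrightarrow> 1) (Rt 0)" by (rule Rlim0)
  show "(Hf m \<longlongrightarrow> -1) (Lt 0)" by (rule Llim0)
  show "0 \<notin> \<rat> \<longrightarrow> 1 = Hf m 0 \<and> -1 = Hf m 0" by simp
  show "\<forall>p q. 0 < q \<longrightarrow> coprime p q \<longrightarrow> (0::real) = of_int p / of_int q \<longrightarrow> 1 - (-1) = J m p q"
    unfolding J_def by auto
qed

lemma PP_neg: assumes "PP m r" shows "PP m (- r)"
proof -
  obtain Lp Lm where h: "(Hf m \<longlongrightarrow> Lp) (Rt r)" "(Hf m \<longlongrightarrow> Lm) (Lt r)"
    "r \<notin> \<rat> \<longrightarrow> Lp = Hf m r \<and> Lm = Hf m r"
    "\<forall>p q. 0 < q \<longrightarrow> coprime p q \<longrightarrow> r = of_int p / of_int q \<longrightarrow> Lp - Lm = J m p q"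
    using assms unfolding PP_def by blast
  show ?thesis unfolding PP_def
  proof (intro exI conjI)
    show "(Hf m \<longlongrightarrow> - Lm) (Rt (- r))" by (rule odd_L2R[OF h(2)])
    show "(Hf m \<longlongrightarrow> - Lp) (Lt (- r))" by (rule odd_R2L[OF h(1)])
    show "- r \<notin> \<rat> \<longrightarrow> - Lm = Hf m (- r) \<and> - Lp = Hf m (- r)"
      using h(3) by (simp add: Hf_odd)
    show "\<forall>p q. 0 < q \<longrightarrow> coprime p q \<longrightarrow> - r = of_int p / of_int q \<longrightarrow> - Lm - - Lp = J m p q"
    proof (intro allI impI)
      fix p q :: int assume pq: "0 < q" "coprime p q" "- r = of_int p / of_int q"
      have "r = of_int (- p) / of_int q" using pq by simp
      moreover have "coprime (- p) q" using pq by simp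
      ultimately have "Lp - Lm = J m (- p) q" using h(4) pq by blast
      moreover have "J m (- p) q = J m p q" unfolding J_def by (simp add: abs_minus_commute)
      ultimately show "- Lm - - Lp = J m p q" by simp
    qed
  qed
qed

lemma pos_frac: fixes r :: real assumes "0 < r" "0 < q" "r = of_int p / of_int q" shows "0 < p"
proof -
  have "0 < (of_int p :: real) / of_int q" using assms by simp
  thus ?thesis using assms(2) by (simp add: zero_less_divide_iff)
qed

lemma rat_frac: "(r::real) = of_int p / of_int q \<Longrightarrow> r \<in> \<rat>" by simp

lemma PP_base_pos: assumes r: "0 < r" "r \<le> 1/2" shows "PP 0 r"
  unfolding PP_def
proof (intro exI conjI)
  show "(Hf 0 \<longlongrightarrow> f_tilde r) (Rt r)" using f_tilde_lim[OF r] by (simp add: Hf_0_fun)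
  show "(Hf 0 \<longlongrightarrow> f_tilde r) (Lt r)" using f_tilde_lim[OF r] by (simp add: Hf_0_fun)
  show "r \<notin> \<rat> \<longrightarrow> f_tilde r = Hf 0 r \<and> f_tilde r = Hf 0 r" by simp
  show "\<forall>p q. 0 < q \<longrightarrow> coprime p q \<longrightarrow> r = of_int p / of_int q \<longrightarrow> f_tilde r - f_tilde r = J 0 p q"
  proof (intro allI impI)
    fix p q :: int assume pq: "0 < q" "coprime p q" "r = of_int p / of_int q"
    have "0 < p" by (rule pos_frac[OF r(1) pq(1,3)])
    moreover have "\<not> nicf_depth r \<le> 0" using depth_ge1[of r] rat_frac[OF pq(3)] r by simp
    ultimately show "f_tilde r - f_tilde r = J 0 p q" unfolding J_def using pq r by simp
  qed
qed


lemma p_eq_1: fixes p q K :: int assumes "0 < p" "coprime p q" "q = K * p" shows "p = 1"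
proof -
  have "p dvd q" using assms by simp
  hence "is_unit p" using coprime_common_divisor[OF assms(2) dvd_refl] by simp
  hence "p dvd 1" by simp
  thus ?thesis using assms(1) zdvd_imp_le[of p 1] by simp
qed

lemma p_eq_2: fixes p q k :: int assumes "0 < p" "coprime p q" "2 * q + p = 2 * k * p" shows "p = 2"
proof -
  have "2 * q = p * (2 * k - 1)" using assms by (simp add: algebra_simps)
  hence "p dvd 2 * q" by (metis dvd_triv_left)
  hence "p dvd 2" using assms(2) by (simp add: coprime_dvd_mult_left_iff)
  hence "p \<le> 2" by (rule zdvd_imp_le) simp
  moreover have "p \<noteq> 1"
  proof
    assume "p = 1"
    hence "2 * q + 1 = 2 * k" using assms(3) by simp
    thus False by presburger
  qed
  ultimately show ?thesis using assms(1) by simp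
qed

lemma PP_step_pos: assumes IH: "\<And>u. \<bar>u\<bar> \<le> 1/2 \<Longrightarrow> PP m u" and r: "0 < r" "r \<le> 1/2"
  shows "PP (Suc m) r"
proof -
  define t0 where "t0 = 1 / r"
  define K where "K = \<lceil>1 / r + 1/2\<rceil> - 1"
  define uR where "uR = 1 / r - of_int K"
  define uL where "uL = sr (1 / r)"
  have t0: "t0 \<ge> 2" using r unfolding t0_def by (simp add: field_simps)
  have K1: "of_int K < t0 + 1/2" "t0 + 1/2 \<le> of_int K + 1"
    unfolding K_def t0_def using ceiling_correct[of "1/r + 1/2"] by linarith+
  have uRb: "\<bar>uR\<bar> \<le> 1/2" using K1 unfolding uR_def t0_def by linarith
  have uLb: "\<bar>uL\<bar> \<le> 1/2" unfolding uL_def by (rule abs_sr_le)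
  obtain LpR LmR where R: "(Hf m \<longlongrightarrow> LpR) (Rt uR)" "(Hf m \<longlongrightarrow> LmR) (Lt uR)"
    "uR \<notin> \<rat> \<longrightarrow> LpR = Hf m uR \<and> LmR = Hf m uR"
    "\<forall>p q. 0 < q \<longrightarrow> coprime p q \<longrightarrow> uR = of_int p / of_int q \<longrightarrow> LpR - LmR = J m p q"
    using IH[OF uRb] unfolding PP_def by blast
  obtain LpL LmL where L: "(Hf m \<longlongrightarrow> LpL) (Rt uL)" "(Hf m \<longlongrightarrow> LmL) (Lt uL)"
    "uL \<notin> \<rat> \<longrightarrow> LpL = Hf m uL \<and> LmL = Hf m uL"
    "\<forall>p q. 0 < q \<longrightarrow> coprime p q \<longrightarrow> uL = of_int p / of_int q \<longrightarrow> LpL - LmL = J m p q"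
    using IH[OF uLb] unfolding PP_def by blast
  have fR: "filterlim sig (Lt uR) (Rt r)" unfolding uR_def K_def by (rule sig_right[OF r])
  have fL: "filterlim sig (Rt uL) (Lt r)" unfolding uL_def by (rule sig_left[OF r])
  have limR: "(Hf (Suc m) \<longlongrightarrow> f_tilde r - r * LmR) (Rt r)"
    unfolding Hf_Suc_fun
    by (intro tendsto_intros f_tilde_lim r filterlim_compose[OF R(2) fR])
  have limL: "(Hf (Suc m) \<longlongrightarrow> f_tilde r - r * LpL) (Lt r)"
    unfolding Hf_Suc_fun
    by (intro tendsto_intros f_tilde_lim r filterlim_compose[OF L(1) fL])
  have sigr: "sig r = uL" unfolding sig_def uL_def using r by simp
  have AH: "A_half r = \<bar>uL\<bar>" unfolding A_half_sr uL_def ..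
  have noint: "uR = uL" if "t0 + 1/2 \<notin> \<int>"
  proof -
    have "t0 + 1/2 \<noteq> of_int \<lfloor>t0 + 1/2\<rfloor>" using that by (metis Ints_of_int)
    hence "\<lceil>t0 + 1/2\<rceil> = \<lfloor>t0 + 1/2\<rfloor> + 1" by (simp add: ceiling_altdef)
    thus ?thesis unfolding uR_def uL_def K_def sr_def t0_def by simp
  qed
  show ?thesis unfolding PP_def
  proof (intro exI conjI)
    show "(Hf (Suc m) \<longlongrightarrow> f_tilde r - r * LmR) (Rt r)" by (rule limR)
    show "(Hf (Suc m) \<longlongrightarrow> f_tilde r - r * LpL) (Lt r)" by (rule limL)
    show "r \<notin> \<rat> \<longrightarrow> f_tilde r - r * LmR = Hf (Suc m) r \<and> f_tilde r - r * LpL = Hf (Suc m) r"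
    proof
      assume rq: "r \<notin> \<rat>"
      have "t0 + 1/2 \<notin> \<int>"
      proof
        assume "t0 + 1/2 \<in> \<int>"
        hence "t0 + 1/2 \<in> \<rat>" by (rule Ints_subset_Rats[THEN subsetD])
        hence "(t0 + 1/2) - 1/2 \<in> \<rat>" by (intro Rats_diff) auto
        hence "1 / t0 \<in> \<rat>" by (intro Rats_divide) auto
        thus False using rq r unfolding t0_def by simp
      qed
      hence e: "uR = uL" by (rule noint)
      have "uL \<in> Irr" unfolding sigr[symmetric] using sig_pos[OF r(1)] Irr_recip_diff[of r] rq
        unfolding Irr_def by simp
      hence "uL \<notin> \<rat>" unfolding Irr_def by simp
      hence "LmR = Hf m (sig r)" "LpL = Hf m (sig r)" using R(3) L(3) e sigr by auto
      thus "f_tilde r - r * LmR = Hf (Suc m) r \<and> f_tilde r - r * LpL = Hf (Suc m) r" by simp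
    qed
    show "\<forall>p q. 0 < q \<longrightarrow> coprime p q \<longrightarrow> r = of_int p / of_int q \<longrightarrow>
        f_tilde r - r * LmR - (f_tilde r - r * LpL) = J (Suc m) p q"
    proof (intro allI impI)
      fix p q :: int assume pq: "0 < q" "coprime p q" "r = of_int p / of_int q"
      have pp: "0 < p" by (rule pos_frac[OF r(1) pq(1,3)])
      have rQ: "r \<in> \<rat>" by (rule rat_frac[OF pq(3)])
      have Jr: "J (Suc m) p q = (if nicf_depth r \<le> Suc m then 2 / of_int q else 0)"
        unfolding J_def using pp pq r by simp
      have ds: "nicf_depth r \<le> Suc m \<longleftrightarrow> (A_half r = 0 \<or> nicf_depth (A_half r) \<le> m)"
        by (rule depth_step) (use rQ r in auto)
      have t0pq: "t0 = of_int q / of_int p" unfolding t0_def pq(3) by simp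
      have jump: "f_tilde r - r * LmR - (f_tilde r - r * LpL) = r * (LpL - LmR)" by (simp add: algebra_simps)
      show "f_tilde r - r * LmR - (f_tilde r - r * LpL) = J (Suc m) p q"
      proof (cases "t0 + 1/2 \<in> \<int>")
        case True
        then obtain k where k: "t0 + 1/2 = of_int k" by (metis Ints_cases)
        have uR2: "uR = 1/2"
        proof -
          have "\<lceil>t0 + 1/2\<rceil> = k" using k by simp
          thus ?thesis unfolding uR_def K_def t0_def[symmetric] using k by simp
        qed
        have uL2: "uL = - (1/2)"
        proof -
          have "\<lfloor>t0 + 1/2\<rfloor> = k" using k by simp
          thus ?thesis unfolding uL_def sr_def t0_def[symmetric] using k by simp
        qed
        have LmRv: "LmR = (if m = 0 then 0 else - 1/2)"
          using tendsto_unique[OF Lt_nontriv R(2)[unfolded uR2] Lhalf] .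
        have LpLv: "LpL = - (if m = 0 then 0 else - 1/2)"
          using tendsto_unique[OF Rt_nontriv L(1)[unfolded uL2] odd_L2R[OF Lhalf, of m]] by simp
        have "2 * q + p = 2 * k * p"
        proof -
          have "of_int q / of_int p + 1/2 = (of_int k :: real)" using k t0pq by simp
          hence "real_of_int (2 * q + p) = real_of_int (2 * k * p)" using pp by (simp add: field_simps)
          thus ?thesis by linarith
        qed
        hence p2: "p = 2" by (rule p_eq_2[OF pp pq(2)])
        have dh: "nicf_depth r \<le> Suc m \<longleftrightarrow> 1 \<le> m" unfolding ds AH uL2 using depth_half by simp
        show ?thesis unfolding jump Jr dh using LmRv LpLv p2 pq(3) by auto
      next
        case False
        hence e: "uR = uL" by (rule noint)
        have LmRL: "LmR = LmL" using tendsto_unique[OF Lt_nontriv R(2)[unfolded e] L(2)] .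
        define K0 where "K0 = \<lfloor>t0 + 1/2\<rfloor>"
        have "uL = t0 - of_int K0" unfolding uL_def sr_def t0_def K0_def by simp
        hence uLpq: "uL = of_int (q - K0 * p) / of_int p" unfolding t0pq using pp by (simp add: field_simps)
        have JL: "LpL - LmL = J m (q - K0 * p) p" using L(4) pp coprime_shift[OF pq(2)] uLpq by blast
        show ?thesis
        proof (cases "q - K0 * p = 0")
          case True
          hence "p = 1" using p_eq_1[OF pp pq(2), of K0] by simp
          moreover have "A_half r = 0" unfolding AH uLpq using True by simp
          hence d: "nicf_depth r \<le> Suc m" using ds by simp
          have j2: "LpL - LmL = 2" using JL True unfolding J_def by simp
          have "r * (LpL - LmL) = 2 / of_int q" unfolding j2 pq(3) using \<open>p = 1\<close> by simp
          thus ?thesis unfolding jump Jr LmRL using d by (simp add: right_diff_distrib)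
        next
          case False
          have AHr: "A_half r = \<bar>of_int (q - K0 * p) / of_int p\<bar>" unfolding AH uLpq ..
          have ne: "real_of_int q \<noteq> real_of_int K0 * real_of_int p"
          proof
            assume "real_of_int q = real_of_int K0 * real_of_int p"
            hence "real_of_int q = real_of_int (K0 * p)" by simp
            hence "q = K0 * p" by (simp only: of_int_eq_iff)
            thus False using False by simp
          qed
          have nz: "A_half r \<noteq> 0" unfolding AHr using ne pp by simp
          have "r * (2 / of_int p) = 2 / of_int q" unfolding pq(3) using pp by simp
          moreover have JL2: "LpL - LmL = (if nicf_depth (A_half r) \<le> m then 2 / of_int p else 0)"
            using JL False unfolding J_def AHr by simp
          moreover have d2: "nicf_depth r \<le> Suc m \<longleftrightarrow> nicf_depth (A_half r) \<le> m" using ds nz by simp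
          ultimately have rr: "r * (2 / of_int p) = 2 / of_int q" by simp
          have "f_tilde r - r * LmR - (f_tilde r - r * LpL) = r * (LpL - LmL)" using jump LmRL by simp
          also have "\<dots> = r * (if nicf_depth (A_half r) \<le> m then 2 / of_int p else 0)" using JL2 by simp
          also have "\<dots> = J (Suc m) p q" unfolding Jr d2 using rr by simp
          finally show ?thesis .
        qed
      qed
    qed
  qed
qed

lemma PP_all: "\<bar>u\<bar> \<le> 1/2 \<Longrightarrow> PP m u"
proof (induction m arbitrary: u)
  case 0
  show ?case
  proof (cases "u = 0")
    case True thus ?thesis using PP_zero by simp
  next
    case False
    show ?thesis
    proof (cases "u > 0")
      case True thus ?thesis using PP_base_pos 0 by simp
    next
      case False
      hence "PP 0 (- u)" using PP_base_pos[of "-u"] 0 \<open>u \<noteq> 0\<close> by simp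
      thus ?thesis using PP_neg[of 0 "-u"] by simp
    qed
  qed
next
  case (Suc m)
  show ?case
  proof (cases "u = 0")
    case True thus ?thesis using PP_zero by simp
  next
    case False
    show ?thesis
    proof (cases "u > 0")
      case True thus ?thesis using PP_step_pos[OF Suc.IH] Suc.prems by simp
    next
      case False
      hence "PP (Suc m) (- u)" using PP_step_pos[OF Suc.IH, of "-u"] Suc.prems \<open>u \<noteq> 0\<close> by simp
      thus ?thesis using PP_neg[of "Suc m" "-u"] by simp
    qed
  qed
qed


lemma at_within_cong_minus: "A - {x} = B - {x} \<Longrightarrow> at x within A = at x within B"
  unfolding at_within_def by simp

lemma transfer_D: assumes "(Hf M \<longlongrightarrow> L) (at r within A)" "B - {r} \<subseteq> A" "B \<subseteq> {0..}"
  shows "(DeltaM M \<longlongrightarrow> L) (at r within B)"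
proof -
  have e: "at r within B = at r within (B - {r})" by (rule at_within_cong_minus) auto
  have "(Hf M \<longlongrightarrow> L) (at r within (B - {r}))" using assms(1) assms(2) by (rule tendsto_within_subset)
  hence h: "(Hf M \<longlongrightarrow> L) (at r within B)" unfolding e .
  have ev: "\<forall>\<^sub>F x in at r within B. Hf M x = DeltaM M x"
    unfolding eventually_at_filter by (rule always_eventually) (use assms(3) DeltaM_Hf in auto)
  show ?thesis using tendsto_cong[OF ev] h by simp
qed

lemma two_sided: assumes "(Hf M \<longlongrightarrow> L) (Rt r)" "(Hf M \<longlongrightarrow> L) (Lt r)"
  shows "(Hf M \<longlongrightarrow> L) (at r within (Irr \<inter> {r<..} \<union> Irr \<inter> {..<r}))"
  using assms by (simp add: Lim_within_Un)

lemma part3: fixes M :: nat shows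
  "continuous_on ({0<..<1/2} - \<rat>) (DeltaM M)
   \<and> (\<forall>r\<in>\<rat>. 0 < r \<and> r < 1/2 \<and> nicf_depth r > M \<longrightarrow>
        (\<exists>L. (DeltaM M \<longlongrightarrow> L) (at r within ({0<..<1/2} - \<rat>))))
   \<and> (\<forall>(p::int) (q::int). 0 < q \<and> coprime p q \<and> 0 < real_of_int p / of_int q
        \<and> real_of_int p / of_int q < 1/2 \<and> nicf_depth (real_of_int p / of_int q) \<le> M \<longrightarrow>
        (\<exists>Lp Lm.
           (DeltaM M \<longlongrightarrow> Lp) (at (real_of_int p / of_int q) within (({0<..<1/2} - \<rat>) \<inter> {real_of_int p / of_int q<..}))
         \<and> (DeltaM M \<longlongrightarrow> Lm) (at (real_of_int p / of_int q) within (({0<..<1/2} - \<rat>) \<inter> {..<real_of_int p / of_int q}))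
         \<and> Lp - Lm = 2 / real_of_int q))"
proof (intro conjI ballI allI impI)
  define S where "S = {0<..<1/2::real} - \<rat>"
  have S0: "S \<subseteq> {0..}" unfolding S_def by auto
  show "continuous_on ({0<..<1/2} - \<rat>) (DeltaM M)"
    unfolding S_def[symmetric] continuous_on_def
  proof
    fix x assume x: "x \<in> S"
    hence xb: "\<bar>x\<bar> \<le> 1/2" "x \<notin> \<rat>" unfolding S_def by auto
    obtain Lp Lm where h: "(Hf M \<longlongrightarrow> Lp) (Rt x)" "(Hf M \<longlongrightarrow> Lm) (Lt x)" "Lp = Hf M x" "Lm = Hf M x"
      using PP_all[OF xb(1), of M] xb(2) unfolding PP_def by blast
    have "(Hf M \<longlongrightarrow> Hf M x) (at x within (Irr \<inter> {x<..} \<union> Irr \<inter> {..<x}))"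
      using h by (intro two_sided) auto
    hence "(DeltaM M \<longlongrightarrow> Hf M x) (at x within S)"
      by (rule transfer_D) (use S0 in \<open>auto simp: S_def Irr_def\<close>)
    moreover have "DeltaM M x = Hf M x" using x S0 DeltaM_Hf by auto
    ultimately show "(DeltaM M \<longlongrightarrow> DeltaM M x) (at x within S)" by simp
  qed
next
  fix r :: real assume rQ: "r \<in> \<rat>" and h: "0 < r \<and> r < 1/2 \<and> M < nicf_depth r"
  obtain p q where pq: "0 < q" "coprime p q" "r = of_int p / of_int q" using rQ by (rule Rats_cases') auto
  have rb: "\<bar>r\<bar> \<le> 1/2" using h by simp
  obtain Lp Lm where L: "(Hf M \<longlongrightarrow> Lp) (Rt r)" "(Hf M \<longlongrightarrow> Lm) (Lt r)" "Lp - Lm = J M p q"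
    using PP_all[OF rb, of M] pq unfolding PP_def by blast
  have pp: "0 < p" using pos_frac[of r q p] h pq by simp
  have "J M p q = 0" unfolding J_def using pp pq h by auto
  hence "Lm = Lp" using L by simp
  hence "(Hf M \<longlongrightarrow> Lp) (at r within (Irr \<inter> {r<..} \<union> Irr \<inter> {..<r}))" using L by (intro two_sided) auto
  hence "(DeltaM M \<longlongrightarrow> Lp) (at r within ({0<..<1/2} - \<rat>))"
    by (rule transfer_D) (auto simp: Irr_def)
  thus "\<exists>L. (DeltaM M \<longlongrightarrow> L) (at r within ({0<..<1/2} - \<rat>))" by blast
next
  fix p q :: int
  assume h: "0 < q \<and> coprime p q \<and> 0 < real_of_int p / of_int q
        \<and> real_of_int p / of_int q < 1/2 \<and> nicf_depth (real_of_int p / of_int q) \<le> M"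
  define r where "r = real_of_int p / of_int q"
  have r01: "0 < r" "r < 1/2" using h unfolding r_def by auto
  hence rb: "\<bar>r\<bar> \<le> 1/2" by simp
  obtain Lp Lm where L: "(Hf M \<longlongrightarrow> Lp) (Rt r)" "(Hf M \<longlongrightarrow> Lm) (Lt r)" "Lp - Lm = J M p q"
    using PP_all[OF rb, of M] h unfolding PP_def r_def by blast
  have pp: "0 < p" using pos_frac[of r q p] h unfolding r_def by simp
  have "J M p q = 2 / of_int q" unfolding J_def using pp h by simp
  moreover have "(DeltaM M \<longlongrightarrow> Lp) (at r within (({0<..<1/2} - \<rat>) \<inter> {r<..}))"
    by (rule transfer_D[OF L(1)]) (auto simp: Irr_def)
  moreover have "(DeltaM M \<longlongrightarrow> Lm) (at r within (({0<..<1/2} - \<rat>) \<inter> {..<r}))"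
    by (rule transfer_D[OF L(2)]) (auto simp: Irr_def)
  ultimately show "\<exists>Lp Lm.
           (DeltaM M \<longlongrightarrow> Lp) (at (real_of_int p / of_int q) within (({0<..<1/2} - \<rat>) \<inter> {real_of_int p / of_int q<..}))
         \<and> (DeltaM M \<longlongrightarrow> Lm) (at (real_of_int p / of_int q) within (({0<..<1/2} - \<rat>) \<inter> {..<real_of_int p / of_int q}))
         \<and> Lp - Lm = 2 / real_of_int q" using L(3) unfolding r_def by auto
qed


lemma gaussA_frac: "gaussA y = frac (1 / y)" unfolding gaussA_def frac_def ..

lemma gaussA_range: "0 \<le> gaussA y" "gaussA y < 1"
  unfolding gaussA_frac by (simp_all add: frac_lt_1)

lemma gaussA0_eq: "gaussA0 y = 1 - gaussA y"
proof -
  have "\<lfloor>1 / y + 1\<rfloor> = \<lfloor>1 / y\<rfloor> + 1" by (rule one_add_floor[symmetric])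
  thus ?thesis unfolding gaussA0_def gaussA_def by simp
qed

lemma irr_recip: fixes y :: real assumes "y \<notin> \<rat>" shows "1 / y \<notin> \<rat>"
proof
  assume "1 / y \<in> \<rat>"
  from Rats_divide[OF Rats_1 this] show False using assms by simp
qed

lemma gaussA_irr: assumes "y \<notin> \<rat>" shows "gaussA y \<notin> \<rat>" "0 < gaussA y"
proof -
  have "1 / y - of_int \<lfloor>1/y\<rfloor> \<in> Irr" using Irr_recip_diff[of y "\<lfloor>1/y\<rfloor>"] assms unfolding Irr_def by simp
  thus "gaussA y \<notin> \<rat>" unfolding gaussA_def Irr_def by simp
  thus "0 < gaussA y" using gaussA_range(1)[of y] by (cases "gaussA y = 0") auto
qed

lemma irr_1m: fixes y :: real assumes "y \<notin> \<rat>" shows "1 - y \<notin> \<rat>"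
proof
  assume "1 - y \<in> \<rat>"
  from Rats_diff[OF Rats_1 this] show False using assms by simp
qed

lemma B_term_shift: assumes "0 \<le> z" "z < 1" shows "B_term z (Suc j) = z * B_term (gaussA z) j"
proof -
  have f1: "frac z = z" using assms by (simp add: frac_eq)
  have f2: "frac (gaussA z) = gaussA z" using gaussA_range by (simp add: frac_eq)
  have fp: "\<And>k. (gaussA ^^ Suc k) z = (gaussA ^^ k) (gaussA z)" by (simp only: funpow_Suc_right comp_def)
  show ?thesis unfolding B_term_def f1 f2
    by (simp del: prod.lessThan_Suc funpow.simps add: prod.lessThan_Suc_shift fp)
qed

lemma W_term_shift: assumes "0 \<le> z" "z < 1" shows "W_term z (Suc j) = - z * W_term (gaussA z) j"
proof -
  have f1: "frac z = z" using assms by (simp add: frac_eq)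
  have f2: "frac (gaussA z) = gaussA z" using gaussA_range by (simp add: frac_eq)
  have fp: "\<And>k. (gaussA ^^ Suc k) z = (gaussA ^^ k) (gaussA z)" by (simp only: funpow_Suc_right comp_def)
  show ?thesis unfolding W_term_def f1 f2
    by (simp del: prod.lessThan_Suc funpow.simps add: prod.lessThan_Suc_shift fp)
qed

lemma B0_term_shift: assumes "0 \<le> z" "z < 1" "0 \<le> gaussA0 z" "gaussA0 z < 1"
  shows "B0_term z (Suc j) = z * B0_term (gaussA0 z) j"
proof -
  have f1: "frac z = z" using assms by (simp add: frac_eq)
  have f2: "frac (gaussA0 z) = gaussA0 z" using assms by (simp add: frac_eq)
  have fp: "\<And>k. (gaussA0 ^^ Suc k) z = (gaussA0 ^^ k) (gaussA0 z)" by (simp only: funpow_Suc_right comp_def)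
  show ?thesis unfolding B0_term_def f1 f2
    by (simp del: prod.lessThan_Suc funpow.simps add: prod.lessThan_Suc_shift fp)
qed

lemma B_term_0: "B_term z 0 = ln (1 / frac z)" unfolding B_term_def by simp
lemma W_term_0: "W_term z 0 = ln (1 / frac z)" unfolding W_term_def by simp
lemma B0_term_0: "B0_term z 0 = ln (1 / frac z)" unfolding B0_term_def by simp

lemma terms_frac_cong: "frac a = frac b \<Longrightarrow> B_term a = B_term b \<and> W_term a = W_term b \<and> B0_term a = B0_term b"
  unfolding B_term_def[abs_def] W_term_def[abs_def] B0_term_def[abs_def] by simp

lemma frac_shift_int: "frac (y + of_int k) = frac y"
  by (simp add: frac_def)

lemma W_abs: "\<bar>W_term z j\<bar> = \<bar>B_term z j\<bar>"
  unfolding W_term_def B_term_def by (simp add: abs_mult)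

lemma ln_inv_nonneg: fixes y :: real shows "0 \<le> y \<Longrightarrow> y \<le> 1 \<Longrightarrow> 0 \<le> ln (1 / y)"
  by (cases "y = 0") (auto intro!: ln_ge_zero)

lemma B_term_nonneg: "0 \<le> B_term z j"
proof -
  have r: "0 \<le> (gaussA ^^ k) (frac z) \<and> (gaussA ^^ k) (frac z) < 1" for k
    by (cases k) (auto simp: gaussA_range frac_lt_1)
  show ?thesis unfolding B_term_def using r
    by (intro mult_nonneg_nonneg prod_nonneg ln_inv_nonneg) (auto intro: less_imp_le)
qed

lemma gaussA0_range: "0 < gaussA0 y" "gaussA0 y \<le> 1"
  unfolding gaussA0_eq using gaussA_range[of y] by auto

lemma B0_term_nonneg: "0 \<le> B0_term z j"
proof -
  have r: "0 \<le> (gaussA0 ^^ k) (frac z) \<and> (gaussA0 ^^ k) (frac z) \<le> 1" for k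
    by (cases k) (auto simp: gaussA0_range frac_lt_1 less_imp_le)
  show ?thesis unfolding B0_term_def using r
    by (intro mult_nonneg_nonneg prod_nonneg ln_inv_nonneg) auto
qed

lemma gaussA_1mx: assumes "0 < x" "x < 1/2" shows "gaussA (1 - x) = x / (1 - x)"
proof -
  have "\<lfloor>1 / (1 - x)\<rfloor> = 1" using assms by (intro floor_unique) (auto simp: field_simps)
  thus ?thesis unfolding gaussA_def using assms by (simp add: field_simps)
qed

lemma gaussA_x1mx: assumes "0 < x" "x < 1/2" shows "gaussA (x / (1 - x)) = gaussA x"
proof -
  have e: "1 / (x / (1 - x)) = 1 / x - 1" using assms by (simp add: field_simps)
  have "\<lfloor>1 / x - 1\<rfloor> = \<lfloor>1/x\<rfloor> - 1" by (intro floor_unique) (use floor_correct[of "1/x"] in auto)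
  thus ?thesis unfolding gaussA_def e by simp
qed

lemma B_term_1mx: assumes "0 < x" "x < 1/2"
  shows "B_term (1 - x) (Suc (Suc j)) = B_term x (Suc j)"
    "B_term (1 - x) 0 = ln (1 / (1 - x))" "B_term (1 - x) 1 = (1 - x) * ln ((1 - x) / x)"
proof -
  have a: "x / (1 - x) < 1" "0 \<le> x / (1 - x)" using assms by (auto simp: field_simps)
  have "B_term (1 - x) (Suc (Suc j)) = (1 - x) * B_term (x / (1 - x)) (Suc j)"
    using B_term_shift[of "1 - x"] assms gaussA_1mx[OF assms] by simp
  also have "\<dots> = (1 - x) * (x / (1 - x) * B_term (gaussA x) j)"
    using B_term_shift[OF a(2) a(1)] gaussA_x1mx[OF assms] by simp
  also have "\<dots> = x * B_term (gaussA x) j" using assms by simp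
  also have "\<dots> = B_term x (Suc j)" using B_term_shift[of x j] assms by simp
  finally show "B_term (1 - x) (Suc (Suc j)) = B_term x (Suc j)" .
  show "B_term (1 - x) 0 = ln (1 / (1 - x))" unfolding B_term_0 using assms by (simp add: frac_eq)
  have "B_term (1 - x) 1 = (1 - x) * B_term (x / (1 - x)) 0"
    using B_term_shift[of "1 - x" 0] assms gaussA_1mx[OF assms] by simp
  thus "B_term (1 - x) 1 = (1 - x) * ln ((1 - x) / x)" unfolding B_term_0 using a assms by (simp add: frac_eq)
qed

lemma W_term_1mx: assumes "0 < x" "x < 1/2"
  shows "W_term (1 - x) (Suc (Suc j)) = x * W_term (gaussA x) j"
    "W_term (1 - x) 0 = ln (1 / (1 - x))" "W_term (1 - x) 1 = - (1 - x) * ln ((1 - x) / x)"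
proof -
  have a: "x / (1 - x) < 1" "0 \<le> x / (1 - x)" using assms by (auto simp: field_simps)
  have "W_term (1 - x) (Suc (Suc j)) = - (1 - x) * W_term (x / (1 - x)) (Suc j)"
    using W_term_shift[of "1 - x"] assms gaussA_1mx[OF assms] by simp
  also have "\<dots> = - (1 - x) * (- (x / (1 - x)) * W_term (gaussA x) j)"
    using W_term_shift[OF a(2) a(1)] gaussA_x1mx[OF assms] by simp
  also have "\<dots> = x * W_term (gaussA x) j" using assms by (simp add: field_simps)
  finally show "W_term (1 - x) (Suc (Suc j)) = x * W_term (gaussA x) j" .
  show "W_term (1 - x) 0 = ln (1 / (1 - x))" unfolding W_term_0 using assms by (simp add: frac_eq)
  have "W_term (1 - x) 1 = - (1 - x) * W_term (x / (1 - x)) 0"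
    using W_term_shift[of "1 - x" 0] assms gaussA_1mx[OF assms] by simp
  thus "W_term (1 - x) 1 = - (1 - x) * ln ((1 - x) / x)" unfolding W_term_0 using a assms by (simp add: frac_eq)
qed


locale xsetup =
  fixes x :: real
  assumes x0: "0 < x" and x1: "x < 1/2" and xirr: "x \<notin> \<rat>"
begin

definition n :: nat where "n = nat \<lfloor>1 / x\<rfloor>"

lemma n_facts: "n \<ge> 2" "real n * x < 1" "1 < (real n + 1) * x" "x * gaussA x = 1 - real n * x"
proof -
  note ff = floor_inv_facts[of x, folded n_def]
  show n2: "n \<ge> 2" using ff x0 x1 by auto
  have le: "real n * x \<le> 1" using ff x0 x1 by auto
  show "1 < (real n + 1) * x" using ff x0 x1 by auto
  have "real n * x \<noteq> 1"
  proof
    assume "real n * x = 1"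
    hence "x = 1 / real n" using x0 n2 by (simp add: field_simps)
    moreover have "1 / real n \<in> \<rat>" by (intro Rats_divide Rats_1 Rats_of_nat)
    ultimately have "x \<in> \<rat>" by metis
    thus False using xirr by simp
  qed
  thus "real n * x < 1" using le by simp
  show "x * gaussA x = 1 - real n * x" using z_gaussA[of x] x0 ff x1 by simp
qed

definition v :: "nat \<Rightarrow> real" where "v k = (1 - (real k + 1) * x) / (1 - real k * x)"

lemma pos_k: "k \<le> n \<Longrightarrow> 0 < 1 - real k * x"
proof -
  assume "k \<le> n"
  hence "real k * x \<le> real n * x" using x0 by (intro mult_right_mono) auto
  thus ?thesis using n_facts by simp
qed

lemma v_range: "k + 1 \<le> n \<Longrightarrow> 0 \<le> v k \<and> v k < 1"
proof -
  assume k: "k + 1 \<le> n"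
  have a: "0 < 1 - (real k + 1) * x" using pos_k[of "k+1"] k by (simp add: algebra_simps)
  have b: "0 < 1 - real k * x" using pos_k[of k] k by simp
  show ?thesis unfolding v_def using a b x0 by (simp add: field_simps)
qed

lemma gaussA0_v: assumes "k + 2 \<le> n" shows "gaussA0 (v k) = v (k + 1)"
proof -
  have a: "0 < 1 - (real k + 2) * x" using pos_k[of "k+2"] assms by (simp add: algebra_simps)
  have b: "0 < 1 - (real k + 1) * x" using pos_k[of "k+1"] assms by (simp add: algebra_simps)
  have c: "0 < 1 - real k * x" using pos_k[of k] assms by simp
  have e: "1 / v k = 1 + x / (1 - (real k + 1) * x)" unfolding v_def using b c by (simp add: field_simps)
  have d1: "0 < x / (1 - (real k + 1) * x)" using x0 b by simp
  have d2: "x / (1 - (real k + 1) * x) < 1" using a b by (simp add: field_simps)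
  have "\<lfloor>1 / v k + 1\<rfloor> = 2" unfolding e using d1 d2 by (intro floor_unique) auto
  hence "gaussA0 (v k) = 2 - (1 + x / (1 - (real k + 1) * x))" unfolding gaussA0_def e by simp
  also have "\<dots> = v (k + 1)" unfolding v_def using b by (simp add: field_simps)
  finally show ?thesis .
qed

lemma B0_orbit: "k + 1 \<le> n \<Longrightarrow> B0_term (1 - x) (k + j) = (1 - real k * x) * B0_term (v k) j"
proof (induction k arbitrary: j)
  case 0
  have "v 0 = 1 - x" unfolding v_def by simp
  thus ?case by simp
next
  case (Suc k)
  have vr: "0 \<le> v k \<and> v k < 1" using v_range[of k] Suc.prems by simp
  have g: "gaussA0 (v k) = v (k + 1)" using gaussA0_v[of k] Suc.prems by simp
  have vr2: "0 \<le> v (k + 1) \<and> v (k + 1) < 1" using v_range[of "k + 1"] Suc.prems by simp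
  have "B0_term (1 - x) (Suc k + j) = B0_term (1 - x) (k + Suc j)" by simp
  also have "\<dots> = (1 - real k * x) * B0_term (v k) (Suc j)" using Suc.IH[of "Suc j"] Suc.prems by simp
  also have "\<dots> = (1 - real k * x) * (v k * B0_term (v (k + 1)) j)"
    using B0_term_shift[of "v k" j] vr vr2 g by simp
  also have "(1 - real k * x) * v k = 1 - real (Suc k) * x"
    unfolding v_def using pos_k[of k] Suc.prems by (simp add: field_simps)
  hence "(1 - real k * x) * (v k * B0_term (v (k + 1)) j) = (1 - real (Suc k) * x) * B0_term (v (Suc k)) j"
    by (simp add: mult.assoc[symmetric])
  finally show ?case .
qed

lemma B0_head: "k < n \<Longrightarrow> B0_term (1 - x) k = (1 - real k * x) * ln ((1 - real k * x) / (1 - (real k + 1) * x))"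
proof -
  assume k: "k < n"
  have "B0_term (1 - x) (k + 0) = (1 - real k * x) * B0_term (v k) 0" using B0_orbit[of k 0] k by simp
  moreover have "B0_term (v k) 0 = ln ((1 - real k * x) / (1 - (real k + 1) * x))"
    unfolding B0_term_0 using v_range[of k] k unfolding v_def by (simp add: frac_eq)
  ultimately show ?thesis by simp
qed

lemma gA_facts: "0 < gaussA x" "gaussA x < 1" "gaussA x \<notin> \<rat>" "0 < gaussA (gaussA x)" "gaussA (gaussA x) \<notin> \<rat>"
  using gaussA_irr[OF xirr] gaussA_range[of x] gaussA_irr[of "gaussA x"] by auto

lemma B0_tail: "B0_term (1 - x) (n + j) = x * B0_term (gaussA x) (Suc j)"
proof -
  obtain k where k: "n = Suc k" using n_facts by (cases n) auto
  have vr: "0 \<le> v k \<and> v k < 1" using v_range[of k] k by simp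
  have p1: "0 < 1 - real n * x" using n_facts by simp
  have p2: "0 < 1 - real k * x" using pos_k[of k] k by simp
  have ev: "1 / v k = 1 + 1 / gaussA x"
  proof -
    have "1 / v k = (1 - real k * x) / (1 - real n * x)" unfolding v_def k using p1 p2 by (simp add: k)
    also have "\<dots> = 1 + x / (1 - real n * x)" using p1 k by (simp add: field_simps)
    also have "x / (1 - real n * x) = 1 / gaussA x" using n_facts x0 gA_facts by (simp add: field_simps)
    finally show ?thesis .
  qed
  have g0: "gaussA0 (v k) = gaussA0 (gaussA x)"
  proof -
    have "\<lfloor>1 + 1 / gaussA x + 1\<rfloor> = \<lfloor>1 / gaussA x + 1\<rfloor> + 1"
      by (metis add.commute add.left_commute one_add_floor)
    thus ?thesis unfolding gaussA0_def ev by simp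
  qed
  have gr: "0 \<le> gaussA0 (gaussA x) \<and> gaussA0 (gaussA x) < 1"
    using gA_facts gaussA_range[of "gaussA x"] unfolding gaussA0_eq by simp
  have "B0_term (1 - x) (n + j) = B0_term (1 - x) (k + Suc j)" using k by simp
  also have "\<dots> = (1 - real k * x) * B0_term (v k) (Suc j)" using B0_orbit[of k "Suc j"] k by simp
  also have "\<dots> = (1 - real k * x) * (v k * B0_term (gaussA0 (gaussA x)) j)"
    using B0_term_shift[of "v k" j] vr gr g0 by simp
  also have "(1 - real k * x) * v k = 1 - real n * x" unfolding v_def k using p2 by (simp add: field_simps)
  hence "(1 - real k * x) * (v k * B0_term (gaussA0 (gaussA x)) j) = (x * gaussA x) * B0_term (gaussA0 (gaussA x)) j"
    using n_facts(4) by (simp add: mult.assoc[symmetric])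
  also have "\<dots> = x * B0_term (gaussA x) (Suc j)"
    using B0_term_shift[of "gaussA x" j] gA_facts gr by simp
  finally show ?thesis .
qed

lemma F_aux: "Suc L \<le> n \<Longrightarrow> (\<Sum>k<Suc L. (1 - real k * x) * ln ((1 - real k * x) / (1 - (real k + 1) * x)))
   = - x * (\<Sum>k=1..L. ln (1 - real k * x)) - (1 - real L * x) * ln (1 - (real L + 1) * x)"
proof (induction L)
  case 0
  have "0 < 1 - x" using x1 by simp
  thus ?case by (simp add: ln_div)
next
  case (Suc L)
  have a: "0 < 1 - (real L + 1) * x" using pos_k[of "Suc L"] Suc.prems by (simp add: algebra_simps)
  have b: "0 < 1 - (real L + 2) * x" using pos_k[of "Suc (Suc L)"] Suc.prems by (simp add: algebra_simps)
  have IH: "(\<Sum>k<Suc L. (1 - real k * x) * ln ((1 - real k * x) / (1 - (real k + 1) * x)))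
   = - x * (\<Sum>k=1..L. ln (1 - real k * x)) - (1 - real L * x) * ln (1 - (real L + 1) * x)"
    using Suc by simp
  have "(\<Sum>k<Suc (Suc L). (1 - real k * x) * ln ((1 - real k * x) / (1 - (real k + 1) * x)))
     = (\<Sum>k<Suc L. (1 - real k * x) * ln ((1 - real k * x) / (1 - (real k + 1) * x)))
       + (1 - (real L + 1) * x) * (ln (1 - (real L + 1) * x) - ln (1 - (real L + 2) * x))"
    using a b by (simp add: ln_div algebra_simps)
  also have "\<dots> = - x * (\<Sum>k=1..Suc L. ln (1 - real k * x)) - (1 - real (Suc L) * x) * ln (1 - (real (Suc L) + 1) * x)"
    unfolding IH by (simp add: sum.cl_ivl_Suc algebra_simps)
  finally show ?case .
qed

lemma F_identity: "(\<Sum>k<n. B0_term (1 - x) k) = x * ln (1 / gaussA x) - Phi x"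
proof -
  obtain L where L: "n = Suc L" using n_facts by (cases n) auto
  have "(\<Sum>k<n. B0_term (1 - x) k) = (\<Sum>k<Suc L. (1 - real k * x) * ln ((1 - real k * x) / (1 - (real k + 1) * x)))"
    unfolding L by (intro sum.cong refl) (use B0_head L in auto)
  also have "\<dots> = - x * (\<Sum>k=1..L. ln (1 - real k * x)) - (1 - real L * x) * ln (1 - (real L + 1) * x)"
    using F_aux[of L] L by simp
  also have "\<dots> = x * ln (1 / gaussA x) - Phi x"
  proof -
    have nL: "nat \<lfloor>1 / x\<rfloor> - 1 = L" using L unfolding n_def by simp
    have t: "x * gaussA x = 1 - (real L + 1) * x" using n_facts(4) L by simp
    have tp: "0 < x * gaussA x" using x0 gA_facts by simp
    have l1: "ln (x * gaussA x) = ln x + ln (gaussA x)" using x0 gA_facts by (simp add: ln_mult)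
    have l2: "ln (1 / gaussA x) = - ln (gaussA x)" using gA_facts by (simp add: ln_div)
    have "Phi x = x * ln x + x * gaussA x * ln (x * gaussA x) + x * (\<Sum>j=1..L. ln (1 - real j * x))"
      unfolding Phi_def nL ..
    hence "x * ln (1 / gaussA x) - Phi x = - (x + x * gaussA x) * ln (x * gaussA x) - x * (\<Sum>j=1..L. ln (1 - real j * x))"
      unfolding l2 using l1 by (simp add: algebra_simps)
    also have "x + x * gaussA x = 1 - real L * x" using t by (simp add: algebra_simps)
    finally show ?thesis unfolding t by (simp add: algebra_simps)
  qed
  finally show ?thesis .
qed

end


definition BJ :: "real \<Rightarrow> bool" where
  "BJ z \<longleftrightarrow> 0 < z \<and> z < 1 \<and> z \<notin> \<rat> \<and> summable (B_term z)"

lemma summable_B_gauss: assumes "0 < z" "z < 1"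
  shows "summable (B_term z) \<longleftrightarrow> summable (B_term (gaussA z))"
proof -
  have "summable (B_term z) \<longleftrightarrow> summable (\<lambda>j. B_term z (Suc j))" by (rule summable_Suc_iff[symmetric])
  also have "\<dots> \<longleftrightarrow> summable (\<lambda>j. z * B_term (gaussA z) j)" using B_term_shift assms by simp
  also have "\<dots> \<longleftrightarrow> summable (B_term (gaussA z))" using assms by (simp add: summable_cmult_iff)
  finally show ?thesis .
qed

lemma summable_B_1m: assumes "0 < x" "x < 1/2"
  shows "summable (B_term (1 - x)) \<longleftrightarrow> summable (B_term x)"
proof -
  have "summable (B_term (1 - x)) \<longleftrightarrow> summable (\<lambda>j. B_term (1 - x) (Suc (Suc j)))"
    using summable_Suc_iff[of "\<lambda>j. B_term (1 - x) (Suc j)"] summable_Suc_iff[of "B_term (1 - x)"] by simp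
  also have "\<dots> \<longleftrightarrow> summable (\<lambda>j. B_term x (Suc j))" using B_term_1mx[OF assms] by simp
  also have "\<dots> \<longleftrightarrow> summable (B_term x)" by (rule summable_Suc_iff)
  finally show ?thesis .
qed

lemma BJ_gauss: "BJ z \<Longrightarrow> BJ (gaussA z)"
  unfolding BJ_def using summable_B_gauss gaussA_irr gaussA_range by auto

lemma half_rat: "(1/2::real) \<in> \<rat>" by (intro Rats_divide Rats_1) (metis Rats_of_nat of_nat_numeral)

lemma irr_ne_half: fixes z :: real shows "z \<notin> \<rat> \<Longrightarrow> z \<noteq> 1/2" using half_rat by metis

lemma BJ_1m: assumes "BJ z" shows "BJ (1 - z)"
proof -
  have z: "0 < z" "z < 1" "z \<notin> \<rat>" "summable (B_term z)" using assms unfolding BJ_def by auto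
  have "z \<noteq> 1/2" using irr_ne_half z(3) by auto
  show ?thesis
  proof (cases "z < 1/2")
    case True thus ?thesis using summable_B_1m[of z] z irr_1m[of z] unfolding BJ_def by auto
  next
    case False
    hence a: "0 < 1 - z" "1 - z < 1/2" using z \<open>z \<noteq> 1/2\<close> by auto
    have "summable (B_term (1 - (1 - z)))" using z by simp
    hence "summable (B_term (1 - z))" using summable_B_1m[OF a] by simp
    thus ?thesis using z irr_1m[of z] unfolding BJ_def by auto
  qed
qed

lemma frac_neg01: "0 < x \<Longrightarrow> x < 1 \<Longrightarrow> frac (- x) = 1 - x"
proof -
  assume x: "0 < x" "x < 1"
  have "x \<notin> \<int>"
  proof
    assume "x \<in> \<int>"
    then obtain k where k: "x = of_int k" by (auto elim: Ints_cases)
    hence "0 < k" "k < 1" using x by auto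
    thus False by simp
  qed
  hence "frac (- x) = 1 - frac x" by (simp add: frac_neg)
  thus ?thesis using x by (simp add: frac_eq)
qed

lemma frac_1m: "0 < x \<Longrightarrow> x < 1 \<Longrightarrow> frac (1 - x) = 1 - x"
  by (simp add: frac_eq)

lemma neg_terms: "0 < x \<Longrightarrow> x < 1 \<Longrightarrow> W_term (- x) = W_term (1 - x) \<and> B0_term (- x) = B0_term (1 - x) \<and> B_term (- x) = B_term (1 - x)"
  using terms_frac_cong[of "- x" "1 - x"] frac_neg01 frac_1m by auto

lemma Delta_periodic: "Delta_minus (y + of_int k) = Delta_minus y"
proof -
  have a: "frac (y + of_int k) = frac y" by (rule frac_shift_int)
  have b: "frac (- (y + of_int k)) = frac (- y)" using frac_shift_int[of "- y" "- k"] by simp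
  show ?thesis unfolding Delta_minus_def wiltonW_def brjunoB0_def
    using terms_frac_cong[OF a] terms_frac_cong[OF b] by simp
qed

lemma Delta_odd: "Delta_minus (- y) = - Delta_minus y"
  unfolding Delta_minus_def by (simp add: field_simps)

lemma Delta_neg01: "0 < x \<Longrightarrow> x < 1 \<Longrightarrow> Delta_minus x = (wiltonW x - wiltonW (1 - x)) / 2 - (brjunoB0 x - brjunoB0 (1 - x))"
  unfolding Delta_minus_def wiltonW_def brjunoB0_def using neg_terms by simp

lemma sums_shift_help: fixes f :: "nat \<Rightarrow> real" shows "(\<lambda>j. f (j + k)) sums s \<Longrightarrow> f sums (s + sum f {..<k})"
  by (simp only: sums_iff_shift)

lemma W_sums: assumes "0 \<le> z" "z < 1" "summable (W_term (gaussA z))"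
  shows "W_term z sums (ln (1 / z) - z * wiltonW (gaussA z))"
proof -
  have e: "\<And>j. W_term z (j + 1) = - z * W_term (gaussA z) j" using W_term_shift assms by simp
  have "(\<lambda>j. W_term z (j + 1)) sums (- z * wiltonW (gaussA z))"
    unfolding e wiltonW_def by (intro sums_mult summable_sums assms)
  hence "W_term z sums (- z * wiltonW (gaussA z) + sum (W_term z) {..<1})" by (rule sums_shift_help)
  thus ?thesis using W_term_0[of z] assms by (simp add: frac_eq)
qed

lemma B_sums: assumes "0 \<le> z" "z < 1" "summable (B_term (gaussA z))"
  shows "B_term z sums (ln (1 / z) + z * brjunoB (gaussA z))"
proof -
  have e: "\<And>j. B_term z (j + 1) = z * B_term (gaussA z) j" using B_term_shift assms by simp
  have "(\<lambda>j. B_term z (j + 1)) sums (z * brjunoB (gaussA z))"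
    unfolding e brjunoB_def by (intro sums_mult summable_sums assms)
  hence "B_term z sums (z * brjunoB (gaussA z) + sum (B_term z) {..<1})" by (rule sums_shift_help)
  thus ?thesis using B_term_0[of z] assms by (simp add: frac_eq add.commute)
qed

lemma B0_sums: assumes "0 \<le> z" "z < 1" "0 \<le> gaussA0 z" "gaussA0 z < 1" "summable (B0_term (gaussA0 z))"
  shows "B0_term z sums (ln (1 / z) + z * brjunoB0 (gaussA0 z))"
proof -
  have e: "\<And>j. B0_term z (j + 1) = z * B0_term (gaussA0 z) j" using B0_term_shift assms by simp
  have "(\<lambda>j. B0_term z (j + 1)) sums (z * brjunoB0 (gaussA0 z))"
    unfolding e brjunoB0_def by (intro sums_mult summable_sums assms)
  hence "B0_term z sums (z * brjunoB0 (gaussA0 z) + sum (B0_term z) {..<1})" by (rule sums_shift_help)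
  thus ?thesis using B0_term_0[of z] assms by (simp add: frac_eq add.commute)
qed

lemma W1_sums: assumes "0 < x" "x < 1/2" "summable (W_term (gaussA x))"
  shows "W_term (1 - x) sums (ln (1 / (1 - x)) - (1 - x) * ln ((1 - x) / x) + x * wiltonW (gaussA x))"
proof -
  have e: "\<And>j. W_term (1 - x) (j + 2) = x * W_term (gaussA x) j" using W_term_1mx[OF assms(1,2)]
    by (simp add: numeral_2_eq_2)
  have "(\<lambda>j. W_term (1 - x) (j + 2)) sums (x * wiltonW (gaussA x))"
    unfolding e wiltonW_def by (intro sums_mult summable_sums assms)
  hence "W_term (1 - x) sums (x * wiltonW (gaussA x) + sum (W_term (1 - x)) {..<2})" by (rule sums_shift_help)
  moreover have "sum (W_term (1 - x)) {..<2} = ln (1 / (1 - x)) - (1 - x) * ln ((1 - x) / x)"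
    using W_term_1mx[OF assms(1,2)] by (simp add: numeral_2_eq_2 algebra_simps)
  ultimately show ?thesis by (simp add: algebra_simps)
qed

lemma B1_sums: assumes "0 < x" "x < 1/2" "summable (B_term (gaussA x))"
  shows "B_term (1 - x) sums (ln (1 / (1 - x)) + (1 - x) * ln ((1 - x) / x) + x * brjunoB (gaussA x))"
proof -
  have "(\<lambda>j. x * B_term (gaussA x) j) sums (x * brjunoB (gaussA x))"
    unfolding brjunoB_def by (intro sums_mult summable_sums assms)
  moreover have e: "\<And>j. B_term (1 - x) (j + 2) = x * B_term (gaussA x) j"
    using B_term_1mx[OF assms(1,2)] B_term_shift[of x] assms by (simp add: numeral_2_eq_2)
  ultimately have "(\<lambda>j. B_term (1 - x) (j + 2)) sums (x * brjunoB (gaussA x))" unfolding e by simp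
  hence "B_term (1 - x) sums (x * brjunoB (gaussA x) + sum (B_term (1 - x)) {..<2})" by (rule sums_shift_help)
  moreover have "sum (B_term (1 - x)) {..<2} = ln (1 / (1 - x)) + (1 - x) * ln ((1 - x) / x)"
    using B_term_1mx[OF assms(1,2)] by (simp add: numeral_2_eq_2)
  ultimately show ?thesis by (simp add: algebra_simps)
qed

lemma (in xsetup) B01_sums: assumes "summable (B0_term (gaussA x))"
  shows "B0_term (1 - x) sums (x * brjunoB0 (gaussA x) - Phi x)"
proof -
  have "B0_term (gaussA x) sums brjunoB0 (gaussA x)" unfolding brjunoB0_def by (rule summable_sums[OF assms])
  hence "(\<lambda>j. B0_term (gaussA x) (j + 1)) sums (brjunoB0 (gaussA x) - sum (B0_term (gaussA x)) {..<1})"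
    by (simp only: sums_iff_shift')
  hence "(\<lambda>j. x * B0_term (gaussA x) (j + 1)) sums (x * (brjunoB0 (gaussA x) - sum (B0_term (gaussA x)) {..<1}))"
    by (rule sums_mult)
  moreover have "sum (B0_term (gaussA x)) {..<1} = ln (1 / gaussA x)"
    using B0_term_0[of "gaussA x"] gA_facts by (simp add: frac_eq)
  ultimately have "(\<lambda>j. x * B0_term (gaussA x) (Suc j)) sums (x * (brjunoB0 (gaussA x) - ln (1 / gaussA x)))"
    by simp
  moreover have e: "\<And>j. B0_term (1 - x) (j + n) = x * B0_term (gaussA x) (Suc j)"
    using B0_tail by (simp add: add.commute)
  ultimately have "(\<lambda>j. B0_term (1 - x) (j + n)) sums (x * (brjunoB0 (gaussA x) - ln (1 / gaussA x)))"
    unfolding e by simp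
  hence "B0_term (1 - x) sums (x * (brjunoB0 (gaussA x) - ln (1 / gaussA x)) + sum (B0_term (1 - x)) {..<n})"
    by (rule sums_shift_help)
  thus ?thesis unfolding F_identity by (simp add: algebra_simps)
qed

lemma brjunoB_nonneg: "summable (B_term z) \<Longrightarrow> 0 \<le> brjunoB z"
  unfolding brjunoB_def by (intro suminf_nonneg B_term_nonneg)

lemma brjunoB0_nonneg: "summable (B0_term z) \<Longrightarrow> 0 \<le> brjunoB0 z"
  unfolding brjunoB0_def by (intro suminf_nonneg B0_term_nonneg)

lemma W_le_B: "summable (B_term z) \<Longrightarrow> summable (W_term z) \<and> \<bar>wiltonW z\<bar> \<le> brjunoB z"
proof -
  assume s: "summable (B_term z)"
  have n: "\<And>j. norm (W_term z j) = B_term z j" using W_abs B_term_nonneg by (simp add: abs_of_nonneg)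
  hence sn: "summable (\<lambda>j. norm (W_term z j))" using s by simp
  hence sw: "summable (W_term z)" by (rule summable_norm_cancel)
  have "norm (suminf (W_term z)) \<le> (\<Sum>j. norm (W_term z j))" by (rule summable_norm[OF sn])
  thus ?thesis using sw n unfolding wiltonW_def brjunoB_def by simp
qed

lemma Bdiff_half: assumes "0 < x" "x < 1/2" "summable (B_term x)"
  shows "\<bar>brjunoB (1 - x) - brjunoB x\<bar> \<le> 1/2"
proof -
  have sg: "summable (B_term (gaussA x))" using summable_B_gauss[of x] assms by simp
  have e1: "brjunoB (1 - x) = ln (1 / (1 - x)) + (1 - x) * ln ((1 - x) / x) + x * brjunoB (gaussA x)"
    using B1_sums[OF assms(1,2) sg] unfolding brjunoB_def by (simp add: sums_iff)
  have e2: "brjunoB x = ln (1 / x) + x * brjunoB (gaussA x)"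
    using B_sums[of x] assms sg unfolding brjunoB_def by (simp add: sums_iff)
  have l1: "ln (1 / (1 - x)) = - ln (1 - x)" using assms by (simp add: ln_div)
  have l2: "ln ((1 - x) / x) = ln (1 - x) - ln x" using assms by (simp add: ln_div)
  have l3: "ln (1 / x) = - ln x" using assms by (simp add: ln_div)
  have d: "brjunoB (1 - x) - brjunoB x = x * ln x - x * ln (1 - x)"
    unfolding e1 e2 l1 l2 l3 by (simp add: algebra_simps)
  have a: "\<bar>x * ln x\<bar> \<le> 1/2" "x * ln x \<le> 0" using xlnx_half[of x] assms by (auto simp: mult_nonneg_nonpos)
  have b: "\<bar>ln (1 - x)\<bar> \<le> 2 * x" "ln (1 - x) \<le> 0" using ln1m_bound[of x] assms by auto
  have c1: "x * ln (1 - x) \<le> 0" using b assms by (simp add: mult_nonneg_nonpos)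
  have c2: "x * (- ln (1 - x)) \<le> x * (2 * x)" using b assms by (intro mult_left_mono) auto
  hence c2: "- (x * ln (1 - x)) \<le> x * (2 * x)" by simp
  have c3: "x * (2 * x) \<le> 1/2" using mult_mono[of x "1/2" "2*x" 1] assms by simp
  have a2: "- (x * ln x) \<le> 1/2" using a by linarith
  show ?thesis unfolding d using a2 a(2) c1 c2 c3 by (intro abs_leI) linarith+
qed

lemma Bdiff: assumes "BJ u" shows "\<bar>brjunoB (1 - u) - brjunoB u\<bar> \<le> 1/2"
proof -
  have u: "0 < u" "u < 1" "u \<notin> \<rat>" "summable (B_term u)" using assms unfolding BJ_def by auto
  have "u \<noteq> 1/2" using irr_ne_half u(3) by auto
  show ?thesis
  proof (cases "u < 1/2")
    case True thus ?thesis using Bdiff_half u by simp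
  next
    case False
    hence a: "0 < 1 - u" "1 - u < 1/2" using u \<open>u \<noteq> 1/2\<close> by auto
    have "summable (B_term (1 - u))" using BJ_1m[OF assms] unfolding BJ_def by simp
    hence "\<bar>brjunoB (1 - (1 - u)) - brjunoB (1 - u)\<bar> \<le> 1/2" using Bdiff_half[OF a] by simp
    thus ?thesis by (simp add: abs_minus_commute)
  qed
qed


lemma sum_split_add: fixes f :: "nat \<Rightarrow> 'a::comm_monoid_add" and n m :: nat shows "sum f {..<n + m} = sum f {..<n} + (\<Sum>i<m. f (n + i))"
  by (induction m) (auto simp: add.assoc)

lemma BJ_facts: "BJ z \<Longrightarrow> 0 < z \<and> z < 1 \<and> z \<notin> \<rat> \<and> summable (B_term z)" unfolding BJ_def by auto

lemma B_rec: assumes "BJ z" shows "brjunoB z = ln (1 / z) + z * brjunoB (gaussA z)"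
proof -
  have "summable (B_term (gaussA z))" using BJ_gauss[OF assms] unfolding BJ_def by simp
  thus ?thesis using B_sums[of z] BJ_facts[OF assms] unfolding brjunoB_def by (simp add: sums_iff)
qed

lemma B_ge_first: assumes "BJ z" shows "ln (1 / z) \<le> brjunoB z" "0 \<le> brjunoB z"
proof -
  have "0 \<le> brjunoB (gaussA z)" using BJ_gauss[OF assms] brjunoB_nonneg unfolding BJ_def by simp
  thus "ln (1 / z) \<le> brjunoB z" using B_rec[OF assms] BJ_facts[OF assms] by simp
  show "0 \<le> brjunoB z" using brjunoB_nonneg BJ_facts[OF assms] by simp
qed

lemma ln_inv_ge: fixes x :: real shows "0 < x \<Longrightarrow> 1 - x \<le> ln (1 / x)"
  using ln_le_minus_one[of x] by (simp add: ln_div)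

lemma B0_partial_bound: "\<forall>z. BJ z \<longrightarrow> (\<Sum>j<N. B0_term z j) \<le> (5 + 5 * brjunoB z)"
proof (induction N rule: less_induct)
  case (less N)
  show ?case
  proof (intro allI impI)
    fix z assume bz: "BJ z"
    note zf = BJ_facts[OF bz]
    have Bz0: "0 \<le> brjunoB z" using B_ge_first[OF bz] by simp
    have "z \<noteq> 1/2" using irr_ne_half zf by auto
    show "(\<Sum>j<N. B0_term z j) \<le> (5 + 5 * brjunoB z)"
    proof (cases "z < 1/2")
      case True
      show ?thesis
      proof (cases N)
        case 0 thus ?thesis using Bz0 by simp
      next
        case (Suc N')
        define w where "w = 1 - gaussA z"
        have bg: "BJ (gaussA z)" by (rule BJ_gauss[OF bz])
        have bw: "BJ w" unfolding w_def by (rule BJ_1m[OF bg])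
        have g0: "gaussA0 z = w" unfolding w_def gaussA0_eq ..
        have wr: "0 \<le> w" "w < 1" using BJ_facts[OF bw] by auto
        have "(\<Sum>j<N. B0_term z j) = B0_term z 0 + (\<Sum>j<N'. B0_term z (Suc j))"
          unfolding Suc by (rule sum.lessThan_Suc_shift)
        also have "\<dots> = ln (1 / z) + z * (\<Sum>j<N'. B0_term w j)"
          using B0_term_shift[of z] zf wr g0 B0_term_0[of z] by (simp add: frac_eq sum_distrib_left)
        also have "\<dots> \<le> ln (1 / z) + z * ((5 + 5 * brjunoB w))"
          using less.IH[of N'] Suc bw zf by (intro add_left_mono mult_left_mono) auto
        also have "\<dots> \<le> ln (1 / z) + z * (5 * (brjunoB (gaussA z) + 3/2))"
        proof -
          have "brjunoB w \<le> brjunoB (gaussA z) + 1/2" using Bdiff[OF bg] unfolding w_def abs_le_iff by linarith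
          thus ?thesis using zf by (intro add_left_mono mult_left_mono) auto
        qed
        also have "\<dots> = ln (1 / z) + 15/2 * z + 5 * (z * brjunoB (gaussA z))" by (simp add: algebra_simps)
        also have "z * brjunoB (gaussA z) = brjunoB z - ln (1 / z)" using B_rec[OF bz] by simp
        also have "ln (1 / z) + 15/2 * z + 5 * (brjunoB z - ln (1 / z)) \<le> (5 + 5 * brjunoB z)"
        proof -
          have "0 \<le> ln (1 / z)" using zf by (intro ln_inv_nonneg) auto
          moreover have "5 * (brjunoB z - ln (1 / z)) = 5 * brjunoB z - 5 * ln (1 / z)" by simp
          ultimately show ?thesis using True by linarith
        qed
        finally show ?thesis .
      qed
    next
      case False
      hence z2: "z > 1/2" using \<open>z \<noteq> 1/2\<close> by simp
      define x where "x = 1 - z"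
      have x: "0 < x" "x < 1/2" "x \<notin> \<rat>" using zf z2 irr_1m[of z] unfolding x_def by auto
      interpret xs: xsetup x using x by unfold_locales
      have zx: "z = 1 - x" unfolding x_def by simp
      have bx: "BJ x" unfolding x_def by (rule BJ_1m[OF bz])
      have bg: "BJ (gaussA x)" by (rule BJ_gauss[OF bx])
      have Bxz: "brjunoB x \<le> brjunoB z + 1/2" using Bdiff[OF bx] unfolding zx abs_le_iff by linarith
      have Phib: "\<bar>Phi x\<bar> \<le> 2" using Phi_bounds(1)[of x] x by simp
      have gl: "x * ln (1 / gaussA x) \<le> x * brjunoB (gaussA x)"
        using B_ge_first(1)[OF bg] x by (intro mult_left_mono) auto
      have lx: "0 \<le> ln (1 / x)" using x by (intro ln_inv_nonneg) auto
      have F: "(\<Sum>k<xs.n. B0_term z k) = x * ln (1 / gaussA x) - Phi x" unfolding zx by (rule xs.F_identity)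
      show ?thesis
      proof (cases "N \<le> xs.n")
        case True
        have "(\<Sum>j<N. B0_term z j) \<le> (\<Sum>j<xs.n. B0_term z j)"
          using True by (intro sum_mono2) (auto intro: B0_term_nonneg)
        also have "\<dots> \<le> x * brjunoB (gaussA x) + 2" unfolding F using gl Phib by linarith
        also have "x * brjunoB (gaussA x) = brjunoB x - ln (1 / x)" using B_rec[OF bx] by simp
        also have "brjunoB x - ln (1 / x) + 2 \<le> (5 + 5 * brjunoB z)" using Bxz lx Bz0 by linarith
        finally show ?thesis .
      next
        case False
        define N' where "N' = N - xs.n - 1"
        have N': "N = xs.n + Suc N'" unfolding N'_def using False by simp
        have n2: "xs.n \<ge> 2" using xs.n_facts by simp
        have "(\<Sum>j<N. B0_term z j) = (\<Sum>j<xs.n. B0_term z j) + (\<Sum>i<Suc N'. B0_term z (xs.n + i))"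
          unfolding N' by (rule sum_split_add)
        also have "(\<Sum>i<Suc N'. B0_term z (xs.n + i)) = x * (\<Sum>i<Suc N'. B0_term (gaussA x) (Suc i))"
        proof -
          have "(\<Sum>i<Suc N'. B0_term z (xs.n + i)) = (\<Sum>i<Suc N'. x * B0_term (gaussA x) (Suc i))"
            unfolding zx using xs.B0_tail by (intro sum.cong) auto
          also have "\<dots> = x * (\<Sum>i<Suc N'. B0_term (gaussA x) (Suc i))" by (rule sum_distrib_left[symmetric])
          finally show ?thesis .
        qed
        also have "(\<Sum>i<Suc N'. B0_term (gaussA x) (Suc i)) = (\<Sum>i<Suc (Suc N'). B0_term (gaussA x) i) - ln (1 / gaussA x)"
        proof -
          have "(\<Sum>i<Suc (Suc N'). B0_term (gaussA x) i) = B0_term (gaussA x) 0 + (\<Sum>i<Suc N'. B0_term (gaussA x) (Suc i))"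
            by (rule sum.lessThan_Suc_shift)
          moreover have "B0_term (gaussA x) 0 = ln (1 / gaussA x)"
            using B0_term_0[of "gaussA x"] xs.gA_facts by (simp add: frac_eq)
          ultimately show ?thesis by simp
        qed
        also have "(\<Sum>i<Suc (Suc N'). B0_term (gaussA x) i) \<le> (5 + 5 * brjunoB (gaussA x))"
          using less.IH[of "Suc (Suc N')"] N' n2 bg by auto
        hence "x * ((\<Sum>i<Suc (Suc N'). B0_term (gaussA x) i) - ln (1 / gaussA x))
            \<le> x * ((5 + 5 * brjunoB (gaussA x)) - ln (1 / gaussA x))"
          using x by (intro mult_left_mono) auto
        hence "(\<Sum>j<xs.n. B0_term z j) + x * ((\<Sum>i<Suc (Suc N'). B0_term (gaussA x) i) - ln (1 / gaussA x))
            \<le> x * ln (1 / gaussA x) - Phi x + x * ((5 + 5 * brjunoB (gaussA x)) - ln (1 / gaussA x))"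
          unfolding F by simp
        also have "\<dots> = - Phi x + 5 * x + 5 * (x * brjunoB (gaussA x))" by (simp add: algebra_simps)
        also have "x * brjunoB (gaussA x) = brjunoB x - ln (1 / x)" using B_rec[OF bx] by simp
        also have "- Phi x + 5 * x + 5 * (brjunoB x - ln (1 / x)) \<le> (5 + 5 * brjunoB z)"
        proof -
          have "1 - x \<le> ln (1 / x)" using ln_inv_ge x by simp
          moreover have "5 * (brjunoB x - ln (1 / x)) = 5 * brjunoB x - 5 * ln (1 / x)" by simp
          ultimately show ?thesis using Phib Bxz x unfolding abs_le_iff by linarith
        qed
        finally show ?thesis .
      qed
    qed
  qed
qed

lemma B0_summable: assumes "BJ z" shows "summable (B0_term z)" "brjunoB0 z \<le> (5 + 5 * brjunoB z)" "0 \<le> brjunoB0 z"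
proof -
  show s: "summable (B0_term z)"
    by (rule summableI_nonneg_bounded[OF B0_term_nonneg]) (use B0_partial_bound assms in blast)
  show "brjunoB0 z \<le> (5 + 5 * brjunoB z)" unfolding brjunoB0_def
    by (rule suminf_le_const[OF s]) (use B0_partial_bound assms in blast)
  show "0 \<le> brjunoB0 z" using brjunoB0_nonneg[OF s] .
qed


lemma W_rec: assumes "BJ z" shows "wiltonW z = ln (1 / z) - z * wiltonW (gaussA z)"
proof -
  have "summable (B_term (gaussA z))" using BJ_gauss[OF assms] unfolding BJ_def by simp
  hence "summable (W_term (gaussA z))" using W_le_B by blast
  thus ?thesis using W_sums[of z] BJ_facts[OF assms] unfolding wiltonW_def by (simp add: sums_iff)
qed

lemma W1_rec: assumes "BJ z" "z < 1/2"
  shows "wiltonW (1 - z) = ln (1 / (1 - z)) - (1 - z) * ln ((1 - z) / z) + z * wiltonW (gaussA z)"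
proof -
  have "summable (B_term (gaussA z))" using BJ_gauss[OF assms(1)] unfolding BJ_def by simp
  hence "summable (W_term (gaussA z))" using W_le_B by blast
  thus ?thesis using W1_sums[of z] BJ_facts[OF assms(1)] assms(2) unfolding wiltonW_def by (simp add: sums_iff)
qed

lemma w0_W: assumes "BJ z" "z < 1/2" shows "w0 z = (wiltonW z + wiltonW (1 - z)) / 2"
proof -
  have z: "0 < z" "z < 1" using BJ_facts[OF assms(1)] by auto
  have l1: "ln (1 / z) = - ln z" using z by (simp add: ln_div)
  have l2: "ln (1 / (1 - z)) = - ln (1 - z)" using z by (simp add: ln_div)
  have l3: "ln ((1 - z) / z) = ln (1 - z) - ln z" using z by (simp add: ln_div)
  show ?thesis unfolding W1_rec[OF assms] W_rec[OF assms(1)] w0_def l1 l2 l3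
    by (simp add: field_simps)
qed

lemma w_fun_W: assumes "BJ u" shows "w_fun u = (wiltonW u + wiltonW (1 - u)) / 2"
proof -
  have u: "0 < u" "u < 1" "u \<noteq> 1/2" using BJ_facts[OF assms] irr_ne_half by auto
  show ?thesis
  proof (cases "u < 1/2")
    case True thus ?thesis using w_fun_small[of u] w0_W[OF assms] u by simp
  next
    case False
    hence fr: "frac u = u" "\<not> frac u < 1/2" using u by (auto simp: frac_eq)
    have "w_fun u = w0 (1 - u)" unfolding w_fun_def using fr by simp
    also have "\<dots> = (wiltonW (1 - u) + wiltonW (1 - (1 - u))) / 2"
      using w0_W[OF BJ_1m[OF assms]] False u by simp
    finally show ?thesis by simp
  qed
qed

lemma B0_rec: assumes "BJ z" shows "brjunoB0 z = ln (1 / z) + z * brjunoB0 (1 - gaussA z)"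
proof -
  have bw: "BJ (1 - gaussA z)" by (rule BJ_1m[OF BJ_gauss[OF assms]])
  have g0: "gaussA0 z = 1 - gaussA z" by (rule gaussA0_eq)
  have r: "0 \<le> gaussA0 z" "gaussA0 z < 1" using BJ_facts[OF bw] unfolding g0 by auto
  have "B0_term z sums (ln (1 / z) + z * brjunoB0 (gaussA0 z))"
    using B0_sums[of z] BJ_facts[OF assms] r B0_summable(1)[OF bw] unfolding g0 by simp
  thus ?thesis unfolding brjunoB0_def g0 by (simp add: sums_iff)
qed

lemma B01_rec: assumes "BJ z" "z < 1/2" shows "brjunoB0 (1 - z) = z * brjunoB0 (gaussA z) - Phi z"
proof -
  have z: "0 < z" "z < 1/2" "z \<notin> \<rat>" using BJ_facts[OF assms(1)] assms(2) by auto
  interpret xs: xsetup z using z by unfold_locales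
  have "summable (B0_term (gaussA z))" using B0_summable(1)[OF BJ_gauss[OF assms(1)]] .
  thus ?thesis using xs.B01_sums unfolding brjunoB0_def by (simp add: sums_iff)
qed

lemma FE: assumes "BJ z" "z < 1/2" shows "Delta_minus z = f_fun z - z * Delta_minus (gaussA z)"
proof -
  have z: "0 < z" "z < 1" using BJ_facts[OF assms(1)] by auto
  have bu: "BJ (gaussA z)" by (rule BJ_gauss[OF assms(1)])
  have u: "0 < gaussA z" "gaussA z < 1" using BJ_facts[OF bu] by auto
  have l1: "ln (1 / z) = - ln z" using z by (simp add: ln_div)
  have l2: "ln (1 / (1 - z)) = - ln (1 - z)" using z by (simp add: ln_div)
  have l3: "ln ((1 - z) / z) = ln (1 - z) - ln z" using z by (simp add: ln_div)
  have wz: "w_fun z = w0 z" using w_fun_small[of z] z assms(2) by simp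
  show ?thesis
    unfolding Delta_neg01[OF z] Delta_neg01[OF u] f_fun_def wz w0_W[OF assms] w_fun_W[OF bu]
      W1_rec[OF assms] W_rec[OF assms(1)] B0_rec[OF assms(1)] B01_rec[OF assms] l1 l2 l3
    by (simp add: field_simps)
qed

lemma Delta_bound: assumes "BJ z" "z < 1/2" shows "\<bar>Delta_minus z\<bar> \<le> 13 + 13 * brjunoB z"
proof -
  have z: "0 < z" "z < 1" using BJ_facts[OF assms(1)] by auto
  have b1: "BJ (1 - z)" by (rule BJ_1m[OF assms(1)])
  have w1: "\<bar>wiltonW z\<bar> \<le> brjunoB z" using W_le_B BJ_facts[OF assms(1)] by blast
  have w2: "\<bar>wiltonW (1 - z)\<bar> \<le> brjunoB (1 - z)" using W_le_B BJ_facts[OF b1] by blast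
  have bd: "brjunoB (1 - z) \<le> brjunoB z + 1/2" using Bdiff[OF assms(1)] unfolding abs_le_iff by linarith
  have c1: "0 \<le> brjunoB0 z" "brjunoB0 z \<le> 5 + 5 * brjunoB z"
    using B0_summable[OF assms(1)] by (auto simp: algebra_simps)
  have c2: "0 \<le> brjunoB0 (1 - z)" "brjunoB0 (1 - z) \<le> 5 + 5 * brjunoB (1 - z)"
    using B0_summable[OF b1] by (auto simp: algebra_simps)
  have B0: "0 \<le> brjunoB z" using B_ge_first[OF assms(1)] by simp
  have e: "Delta_minus z = wiltonW z / 2 - wiltonW (1 - z) / 2 - brjunoB0 z + brjunoB0 (1 - z)"
    unfolding Delta_neg01[OF z] by (simp add: field_simps)
  show ?thesis unfolding e using w1 w2 bd c1 c2 B0 unfolding abs_le_iff by linarith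
qed

lemma sig_gauss: "y > 0 \<Longrightarrow> sig y = gaussA y + of_int (\<lfloor>1/y\<rfloor> - \<lfloor>1/y + 1/2\<rfloor>)"
  unfolding sig_pos gaussA_def by simp

lemma FE_signed: assumes "0 < \<bar>y\<bar>" "\<bar>y\<bar> < 1/2" "BJ \<bar>y\<bar>"
  shows "Delta_minus y = f_tilde y - y * Delta_minus (sig y)"
proof (cases "y > 0")
  case True
  hence a: "\<bar>y\<bar> = y" by simp
  have "Delta_minus (sig y) = Delta_minus (gaussA y)" unfolding sig_gauss[OF True] by (rule Delta_periodic)
  moreover have "f_tilde y = f_fun y" using True assms by (intro f_tilde_small) auto
  ultimately show ?thesis using FE[of y] assms unfolding a by simp
next
  case False
  hence a: "\<bar>y\<bar> = - y" "- y > 0" using assms by auto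
  have "Delta_minus (sig (- y)) = Delta_minus (gaussA (- y))" unfolding sig_gauss[OF a(2)] by (rule Delta_periodic)
  moreover have "f_tilde (- y) = f_fun (- y)" using a assms by (intro f_tilde_small) auto
  moreover have "Delta_minus (- y) = f_fun (- y) - (- y) * Delta_minus (gaussA (- y))" using FE[of "- y"] assms unfolding a by simp
  ultimately show ?thesis using Delta_odd[of y] f_tilde_odd[of y] sig_even[of y] by simp
qed


lemma gA_1m: assumes "1/2 < g" "g < 1"
  shows "gaussA (1 - g) = gaussA (gaussA g)" "g * gaussA g = 1 - g"
proof -
  have fl: "\<lfloor>1 / g\<rfloor> = 1" using assms by (intro floor_unique) (auto simp: field_simps)
  hence ga: "gaussA g = 1 / g - 1" unfolding gaussA_def by simp
  show "g * gaussA g = 1 - g" unfolding ga using assms by (simp add: field_simps)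
  have "1 / gaussA g = 1 / (1 - g) + of_int (-1)" unfolding ga using assms by (simp add: field_simps)
  hence "gaussA (gaussA g) = frac (1 / (1 - g) + of_int (-1))" unfolding gaussA_frac by simp
  also have "\<dots> = frac (1 / (1 - g))" by (rule frac_shift_int)
  finally show "gaussA (1 - g) = gaussA (gaussA g)" unfolding gaussA_frac by simp
qed

context
  fixes x :: real
  assumes bx: "BJ x" and xh: "x < 1/2"
begin

definition g :: "nat \<Rightarrow> real" where "g k = (gaussA ^^ k) x"

lemma g_Suc: "g (Suc k) = gaussA (g k)" unfolding g_def by simp

lemma BJ_g: "BJ (g k)"
  by (induction k) (auto simp: g_def bx intro: BJ_gauss)

lemma absY_Suc: "\<bar>Y x (Suc N)\<bar> = (if frac (1 / \<bar>Y x N\<bar>) < 1/2 then frac (1 / \<bar>Y x N\<bar>) else 1 - frac (1 / \<bar>Y x N\<bar>))"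
  unfolding Y_Suc' sig_def abs_sr_frac ..

lemma inv: "\<exists>K\<ge>N. (\<Prod>k<N. \<bar>Y x k\<bar>) = (\<Prod>k<K. g k) \<and> (\<bar>Y x N\<bar> = g K \<or> (\<bar>Y x N\<bar> = 1 - g K \<and> 1/2 < g K))"
proof (induction N)
  case 0
  have "x > 0" using BJ_facts[OF bx] by simp
  thus ?case by (intro exI[of _ 0]) (simp add: g_def)
next
  case (Suc N)
  then obtain K where K: "K \<ge> N" "(\<Prod>k<N. \<bar>Y x k\<bar>) = (\<Prod>k<K. g k)"
    "\<bar>Y x N\<bar> = g K \<or> (\<bar>Y x N\<bar> = 1 - g K \<and> 1/2 < g K)" by blast
  have disj: "\<And>K'. (if gaussA (g K') < 1/2 then gaussA (g K') else 1 - gaussA (g K')) = g (Suc K')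
      \<or> ((if gaussA (g K') < 1/2 then gaussA (g K') else 1 - gaussA (g K')) = 1 - g (Suc K') \<and> 1/2 < g (Suc K'))"
  proof -
    fix K'
    have "g (Suc K') \<noteq> 1/2" using BJ_g[of "Suc K'"] irr_ne_half unfolding BJ_def by auto
    thus "?thesis K'" unfolding g_Suc by auto
  qed
  show ?case
    using K(3)
  proof
    assume y: "\<bar>Y x N\<bar> = g K"
    have "\<bar>Y x (Suc N)\<bar> = (if gaussA (g K) < 1/2 then gaussA (g K) else 1 - gaussA (g K))"
      unfolding absY_Suc y gaussA_frac[symmetric] ..
    moreover have "(\<Prod>k<Suc N. \<bar>Y x k\<bar>) = (\<Prod>k<Suc K. g k)" using K(2) y by simp
    ultimately show ?case using disj[of K] K(1) by (intro exI[of _ "Suc K"]) auto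
  next
    assume y: "\<bar>Y x N\<bar> = 1 - g K \<and> 1/2 < g K"
    have gK: "g K < 1" using BJ_g[of K] unfolding BJ_def by simp
    note e = gA_1m[of "g K"]
    have "\<bar>Y x (Suc N)\<bar> = (if gaussA (g (Suc K)) < 1/2 then gaussA (g (Suc K)) else 1 - gaussA (g (Suc K)))"
      unfolding absY_Suc y[THEN conjunct1] gaussA_frac[symmetric] g_Suc using e y gK by simp
    moreover have "(\<Prod>k<Suc N. \<bar>Y x k\<bar>) = (\<Prod>k<Suc (Suc K). g k)" using K(2) y e gK by (simp add: g_Suc)
    ultimately show ?case using disj[of "Suc K"] K(1) by (intro exI[of _ "Suc (Suc K)"]) auto
  qed
qed

lemma Y_good: "BJ \<bar>Y x N\<bar> \<and> \<bar>Y x N\<bar> < 1/2"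
proof -
  obtain K where K: "\<bar>Y x N\<bar> = g K \<or> (\<bar>Y x N\<bar> = 1 - g K \<and> 1/2 < g K)" using inv[of N] by blast
  hence b: "BJ \<bar>Y x N\<bar>" using BJ_g[of K] BJ_1m by auto
  have "\<bar>Y x N\<bar> \<le> 1/2" using Y_bound[of x N] BJ_facts[OF bx] xh by simp
  moreover have "\<bar>Y x N\<bar> \<noteq> 1/2" using b irr_ne_half unfolding BJ_def by auto
  ultimately show ?thesis using b by simp
qed

lemma B_tail: "B_term x (j + K) = (\<Prod>k<K. g k) * B_term (g K) j"
proof (induction K arbitrary: j)
  case 0 thus ?case by (simp add: g_def)
next
  case (Suc K)
  have r: "0 \<le> g K" "g K < 1" using BJ_g[of K] unfolding BJ_def by auto
  have "B_term x (j + Suc K) = B_term x (Suc j + K)" by simp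
  also have "\<dots> = (\<Prod>k<K. g k) * B_term (g K) (Suc j)" by (rule Suc.IH)
  also have "\<dots> = (\<Prod>k<K. g k) * (g K * B_term (g (Suc K)) j)" using B_term_shift[OF r] g_Suc by simp
  finally show ?case by (simp add: mult.assoc)
qed

lemma B_split: "brjunoB x = (\<Prod>k<K. g k) * brjunoB (g K) + (\<Sum>j<K. B_term x j)"
proof -
  have s: "summable (B_term (g K))" using BJ_g[of K] unfolding BJ_def by simp
  have "(\<lambda>j. B_term x (j + K)) sums ((\<Prod>k<K. g k) * brjunoB (g K))"
    unfolding B_tail brjunoB_def by (intro sums_mult summable_sums s)
  hence "B_term x sums ((\<Prod>k<K. g k) * brjunoB (g K) + (\<Sum>j<K. B_term x j))" by (rule sums_shift_help)
  thus ?thesis unfolding brjunoB_def by (simp add: sums_iff)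
qed

definition T :: "nat \<Rightarrow> real" where "T N = brjunoB x - (\<Sum>j<N. B_term x j)"

lemma T_lim: "T \<longlonglongrightarrow> 0"
proof -
  have "(\<lambda>N. \<Sum>j<N. B_term x j) \<longlonglongrightarrow> brjunoB x"
    unfolding brjunoB_def using BJ_facts[OF bx] by (intro summable_LIMSEQ) simp
  hence "(\<lambda>N. brjunoB x - (\<Sum>j<N. B_term x j)) \<longlonglongrightarrow> brjunoB x - brjunoB x" by (intro tendsto_intros)
  thus ?thesis unfolding T_def by simp
qed

lemma T_mono: "N \<le> K \<Longrightarrow> T K \<le> T N"
  unfolding T_def by (simp add: sum_mono2 B_term_nonneg)

definition I :: "nat \<Rightarrow> real" where "I N = (\<Prod>k<N. Y x k) * Delta_minus (Y x N)"

lemma I_bound: "\<bar>I N\<bar> \<le> 39/2 * (1/2) ^ N + 13 * T N"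
proof -
  obtain K where K: "K \<ge> N" "(\<Prod>k<N. \<bar>Y x k\<bar>) = (\<Prod>k<K. g k)"
    "\<bar>Y x N\<bar> = g K \<or> (\<bar>Y x N\<bar> = 1 - g K \<and> 1/2 < g K)" using inv[of N] by blast
  define P where "P = (\<Prod>k<K. g k)"
  have P0: "0 \<le> P" unfolding P_def using BJ_g unfolding BJ_def by (intro prod_nonneg) (auto intro: less_imp_le)
  have Pb: "P \<le> (1/2) ^ N"
    using prod_Y_bound[of x N] K(2) BJ_facts[OF bx] xh unfolding P_def abs_prod by simp
  have yg: "BJ \<bar>Y x N\<bar>" "\<bar>Y x N\<bar> < 1/2" using Y_good by auto
  have dD: "\<bar>Delta_minus (Y x N)\<bar> = \<bar>Delta_minus \<bar>Y x N\<bar>\<bar>"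
    by (cases "Y x N \<ge> 0") (simp_all add: Delta_odd)
  have d1: "\<bar>Delta_minus (Y x N)\<bar> \<le> 13 + 13 * brjunoB \<bar>Y x N\<bar>" unfolding dD by (rule Delta_bound[OF yg])
  have by1: "brjunoB \<bar>Y x N\<bar> \<le> brjunoB (g K) + 1/2"
    using K(3) Bdiff[OF BJ_g[of K]] unfolding abs_le_iff by auto
  have d2: "\<bar>Delta_minus (Y x N)\<bar> \<le> 39/2 + 13 * brjunoB (g K)" using d1 by1 by linarith
  have "\<bar>I N\<bar> = P * \<bar>Delta_minus (Y x N)\<bar>" unfolding I_def P_def K(2)[symmetric] abs_mult abs_prod ..
  also have "\<dots> \<le> P * (39/2 + 13 * brjunoB (g K))" using d2 P0 by (intro mult_left_mono) auto
  also have "\<dots> = 39/2 * P + 13 * (P * brjunoB (g K))" by (simp add: algebra_simps)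
  also have "P * brjunoB (g K) = T K" unfolding T_def P_def using B_split[of K] by simp
  also have "39/2 * P + 13 * T K \<le> 39/2 * (1/2) ^ N + 13 * T N"
    using Pb T_mono[OF K(1)] by simp
  finally show ?thesis .
qed

lemma I_lim: "I \<longlonglongrightarrow> 0"
proof (rule Lim_null_comparison)
  show "\<forall>\<^sub>F N in sequentially. norm (I N) \<le> 39/2 * (1/2) ^ N + 13 * T N"
    using I_bound by simp
  have "(\<lambda>N. 39/2 * (1/2::real) ^ N + 13 * T N) \<longlonglongrightarrow> 39/2 * 0 + 13 * 0"
    by (intro tendsto_intros T_lim LIMSEQ_power_zero) simp
  thus "(\<lambda>N. 39/2 * (1/2::real) ^ N + 13 * T N) \<longlonglongrightarrow> 0" by simp
qed

lemma remainder: "Delta_minus x - (\<Sum>i<N. dterm x i) = (-1) ^ N * I N"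
proof (induction N)
  case 0 thus ?case unfolding I_def by simp
next
  case (Suc N)
  have x0: "0 \<le> x" using BJ_facts[OF bx] by simp
  have yg: "BJ \<bar>Y x N\<bar>" "\<bar>Y x N\<bar> < 1/2" using Y_good by auto
  have yp: "0 < \<bar>Y x N\<bar>" using BJ_facts[OF yg(1)] by simp
  have fe: "Delta_minus (Y x N) = f_tilde (Y x N) - Y x N * Delta_minus (Y x (Suc N))"
    unfolding Y_Suc' by (rule FE_signed[OF yp yg(2) yg(1)])
  have "Delta_minus x - (\<Sum>i<Suc N. dterm x i) = (-1) ^ N * I N - dterm x N" using Suc by simp
  also have "\<dots> = (-1) ^ Suc N * I (Suc N)"
    unfolding I_def dterm_Y[OF x0] fe by (simp add: algebra_simps)
  finally show ?case .
qed

lemma part1_main: "dterm x sums Delta_minus x"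
proof -
  have "(\<lambda>N. (-1) ^ N * I N) \<longlonglongrightarrow> 0"
  proof (rule Lim_null_comparison)
    show "\<forall>\<^sub>F N in sequentially. norm ((-1) ^ N * I N) \<le> \<bar>I N\<bar>" by (simp add: abs_mult)
    show "(\<lambda>N. \<bar>I N\<bar>) \<longlonglongrightarrow> 0" using tendsto_rabs[OF I_lim] by simp
  qed
  hence "(\<lambda>N. Delta_minus x - (\<Sum>i<N. dterm x i)) \<longlonglongrightarrow> 0" unfolding remainder .
  hence "(\<lambda>N. Delta_minus x - (Delta_minus x - (\<Sum>i<N. dterm x i))) \<longlonglongrightarrow> Delta_minus x - 0"
    by (intro tendsto_intros)
  thus ?thesis unfolding sums_def by simp
qed

end

lemma part1: "\<forall>x. brjuno x \<and> 0 < x \<and> x < 1/2 \<longrightarrow> (dterm x) sums (Delta_minus x)"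
proof (intro allI impI)
  fix x :: real assume h: "brjuno x \<and> 0 < x \<and> x < 1/2"
  hence "BJ x" unfolding BJ_def brjuno_def by auto
  thus "dterm x sums Delta_minus x" using part1_main h by blast
qed


theorem mainTheorem7:
  shows "(\<forall>x. brjuno x \<and> 0 < x \<and> x < 1/2 \<longrightarrow> (dterm x) sums (Delta_minus x))
    \<and> uniformly_convergent_on ({0<..<1/2} - \<rat>) (\<lambda>n x. \<Sum>i<n. dterm x i)
    \<and> (\<forall>M::nat. M \<ge> 1 \<longrightarrow>
         continuous_on ({0<..<1/2} - \<rat>) (DeltaM M)
       \<and> (\<forall>r\<in>\<rat>. 0 < r \<and> r < 1/2 \<and> nicf_depth r > M \<longrightarrow>
            (\<exists>L. (DeltaM M \<longlongrightarrow> L) (at r within ({0<..<1/2} - \<rat>))))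
       \<and> (\<forall>(p::int) (q::int). 0 < q \<and> coprime p q \<and> 0 < real_of_int p / of_int q
            \<and> real_of_int p / of_int q < 1/2 \<and> nicf_depth (real_of_int p / of_int q) \<le> M \<longrightarrow>
            (\<exists>Lp Lm.
               (DeltaM M \<longlongrightarrow> Lp) (at (real_of_int p / of_int q) within (({0<..<1/2} - \<rat>) \<inter> {real_of_int p / of_int q<..}))
             \<and> (DeltaM M \<longlongrightarrow> Lm) (at (real_of_int p / of_int q) within (({0<..<1/2} - \<rat>) \<inter> {..<real_of_int p / of_int q}))
             \<and> Lp - Lm = 2 / real_of_int q)))"
    using part1 part2 part3 by blast

end
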